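(* Let $A=\mathbb{C}Q/I$ be a toupie algebra with $a>0$. The centre of the Lie algebra $\mathrm{HH}^1(A)$ is the $\mathbb{C}$-vector space spanned by $C''_1=\{y_i\}$, where $y_i$ is the class of $\alpha^i_0\|\alpha^i_0$ and $\alpha^{(i)}$ ranges over the branches containing monomial relations.
   Context: A finite quiver $Q$ is a toupie quiver if it has a unique source $0$, a unique sink $\omega$, and every other vertex is the source of exactly one arrow and the target of exactly one arrow. Paths are composed left to right. A branch is a path from $0$ to $\omega$; the arrows of a branch $\alpha^{(i)}$ are $\alpha^i_0,\alpha^i_1,\dots$, $\alpha^i_0$ starting at $0$. A toupie algebra is $A=\mathbb{C}Q/I$ with $Q$ toupie and $I$ an admissible ideal generated by monomial relations (paths inside one branch) and non-monomial relations (linear combinations of branches). $a$ is the number of arrows from $0$ to $\omega$. $E=\mathbb{C}Q_0$. For an arrow $\gamma$ and $h\in e_{s(\gamma)}Ae_{t(\gamma)}$, $\gamma\|h$ is the derivation of $A$ vanishing on $E$ sending $\gamma$ to $h$ and all other arrows to $0$ (when it defines a derivation); $\mathrm{HH}^1(A)$ is the space of derivations of $A$ vanishing on $E$ modulo inner derivations $[e,-]$, $e\in E$, a Lie algebra with the Gerstenhaber bracket (commutator of derivations). *)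

theory Defs
  imports Complex_Main "HOL-Library.Function_Algebras"
begin

text \<open>A toupie quiver is determined (up to isomorphism) by its
branches: branch i (i < n) is a path of length L i >= 1 from the source 0 to the
sink omega; its arrows are alpha^i_m (m < L i), alpha^i_m going from position m to
position m+1 of branch i.  Position 0 of every branch is the source, position L i
is the sink, and the positions 0 < j < L i are the interior vertices Mid i j.\<close>

datatype vtx = Src | Snk | Mid nat nat

text \<open>Paths: trivial paths at vertices, and Pth i j k = alpha^i_j ... alpha^i_(k-1)
(j < k <= L i); these are all paths of a toupie quiver.\<close>

datatype path = Triv vtx | Pth nat nat nat

definition vpos :: "(nat \<Rightarrow> nat) \<Rightarrow> nat \<Rightarrow> nat \<Rightarrow> vtx" where
  "vpos L i j = (if j = 0 then Src else if j = L i then Snk else Mid i j)"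

definition vertices :: "nat \<Rightarrow> (nat \<Rightarrow> nat) \<Rightarrow> vtx set" where
  "vertices n L = {Src, Snk} \<union> {Mid i j | i j. i < n \<and> 0 < j \<and> j < L i}"

definition paths :: "nat \<Rightarrow> (nat \<Rightarrow> nat) \<Rightarrow> path set" where
  "paths n L = Triv ` vertices n L \<union> {Pth i j k | i j k. i < n \<and> j < k \<and> k \<le> L i}"

fun psrc :: "(nat \<Rightarrow> nat) \<Rightarrow> path \<Rightarrow> vtx" where
  "psrc L (Triv v) = v"
| "psrc L (Pth i j k) = vpos L i j"

fun ptgt :: "(nat \<Rightarrow> nat) \<Rightarrow> path \<Rightarrow> vtx" where
  "ptgt L (Triv v) = v"
| "ptgt L (Pth i j k) = vpos L i k"

text \<open>Concatenation (left to right) of composable paths.\<close>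
fun pcomp :: "path \<Rightarrow> path \<Rightarrow> path" where
  "pcomp (Triv v) q = q"
| "pcomp (Pth i j k) (Triv v) = Pth i j k"
| "pcomp (Pth i j k) (Pth i' j' k') = Pth i j k'"

definition CQ :: "nat \<Rightarrow> (nat \<Rightarrow> nat) \<Rightarrow> (path \<Rightarrow> complex) set" where
  "CQ n L = {x. \<forall>p. p \<notin> paths n L \<longrightarrow> x p = 0}"

definition bv :: "path \<Rightarrow> (path \<Rightarrow> complex)" where
  "bv p = (\<lambda>r. if r = p then 1 else 0)"

definition scal :: "complex \<Rightarrow> (path \<Rightarrow> complex) \<Rightarrow> (path \<Rightarrow> complex)" where
  "scal c x = (\<lambda>p. c * x p)"

definition mult :: "nat \<Rightarrow> (nat \<Rightarrow> nat) \<Rightarrow> (path \<Rightarrow> complex) \<Rightarrow> (path \<Rightarrow> complex) \<Rightarrow> (path \<Rightarrow> complex)" where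
  "mult n L x y = (\<lambda>r. \<Sum>(p, q) \<in> paths n L \<times> paths n L.
      if ptgt L p = psrc L q \<and> pcomp p q = r then x p * y q else 0)"

definition branch :: "(nat \<Rightarrow> nat) \<Rightarrow> nat \<Rightarrow> path" where
  "branch L i = Pth i 0 (L i)"

inductive_set gen_ideal :: "nat \<Rightarrow> (nat \<Rightarrow> nat) \<Rightarrow> (path \<Rightarrow> complex) set \<Rightarrow> (path \<Rightarrow> complex) set"
  for n L G where
  gen: "g \<in> G \<Longrightarrow> g \<in> gen_ideal n L G"
| zero: "0 \<in> gen_ideal n L G"
| add: "x \<in> gen_ideal n L G \<Longrightarrow> y \<in> gen_ideal n L G \<Longrightarrow> x + y \<in> gen_ideal n L G"
| smult: "x \<in> gen_ideal n L G \<Longrightarrow> scal c x \<in> gen_ideal n L G"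
| lmult: "x \<in> gen_ideal n L G \<Longrightarrow> a \<in> CQ n L \<Longrightarrow> mult n L a x \<in> gen_ideal n L G"
| rmult: "x \<in> gen_ideal n L G \<Longrightarrow> a \<in> CQ n L \<Longrightarrow> mult n L x a \<in> gen_ideal n L G"

text \<open>Admissible toupie generators: each generator is either a monomial relation
(a path of length >= 2 inside one branch) or a non-monomial relation (a linear
combination of branches; admissibility forces coefficient 0 on branches of length 1).\<close>
definition toupie_generators :: "nat \<Rightarrow> (nat \<Rightarrow> nat) \<Rightarrow> (path \<Rightarrow> complex) set \<Rightarrow> bool" where
  "toupie_generators n L G \<longleftrightarrow>
     (\<forall>g\<in>G. (\<exists>i j k. i < n \<and> j < k \<and> k \<le> L i \<and> 2 \<le> k - j \<and> g = bv (Pth i j k))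
          \<or> (\<exists>c :: nat \<Rightarrow> complex. (\<forall>i<n. L i = 1 \<longrightarrow> c i = 0)
                 \<and> g = (\<Sum>i<n. scal (c i) (bv (branch L i)))))"

definition num_a :: "nat \<Rightarrow> (nat \<Rightarrow> nat) \<Rightarrow> nat" where
  "num_a n L = card {i. i < n \<and> L i = 1}"

text \<open>Derivations of A = CQ/I vanishing on E, represented by lifts d : CQ -> CQ that
respect congruence modulo I and satisfy linearity / Leibniz rule modulo I.\<close>
definition is_der :: "nat \<Rightarrow> (nat \<Rightarrow> nat) \<Rightarrow> (path \<Rightarrow> complex) set
    \<Rightarrow> ((path \<Rightarrow> complex) \<Rightarrow> (path \<Rightarrow> complex)) \<Rightarrow> bool" where
  "is_der n L I d \<longleftrightarrow>
     (\<forall>x\<in>CQ n L. d x \<in> CQ n L)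
   \<and> (\<forall>x\<in>CQ n L. \<forall>y\<in>CQ n L. x - y \<in> I \<longrightarrow> d x - d y \<in> I)
   \<and> (\<forall>x\<in>CQ n L. \<forall>y\<in>CQ n L. d (x + y) - (d x + d y) \<in> I)
   \<and> (\<forall>c. \<forall>x\<in>CQ n L. d (scal c x) - scal c (d x) \<in> I)
   \<and> (\<forall>x\<in>CQ n L. \<forall>y\<in>CQ n L. d (mult n L x y) - (mult n L (d x) y + mult n L x (d y)) \<in> I)
   \<and> (\<forall>v\<in>vertices n L. d (bv (Triv v)) \<in> I)"

definition in_E :: "nat \<Rightarrow> (nat \<Rightarrow> nat) \<Rightarrow> (path \<Rightarrow> complex) \<Rightarrow> bool" where
  "in_E n L e \<longleftrightarrow> e \<in> CQ n L \<and> (\<forall>i j k. e (Pth i j k) = 0)"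

definition inner_der :: "nat \<Rightarrow> (nat \<Rightarrow> nat) \<Rightarrow> (path \<Rightarrow> complex) \<Rightarrow> (path \<Rightarrow> complex) \<Rightarrow> (path \<Rightarrow> complex)" where
  "inner_der n L e x = mult n L e x - mult n L x e"

text \<open>gamma || h for gamma = alpha^i_m : the derivation of CQ vanishing on E sending
alpha^i_m to h and all other arrows to 0 (Leibniz rule on paths).\<close>
definition subp :: "(nat \<Rightarrow> nat) \<Rightarrow> nat \<Rightarrow> nat \<Rightarrow> nat \<Rightarrow> path" where
  "subp L i j k = (if j = k then Triv (vpos L i j) else Pth i j k)"

fun arrow_contrib :: "nat \<Rightarrow> (nat \<Rightarrow> nat) \<Rightarrow> nat \<Rightarrow> nat \<Rightarrow> (path \<Rightarrow> complex) \<Rightarrow> path \<Rightarrow> (path \<Rightarrow> complex)" where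
  "arrow_contrib n L i m h (Triv v) = 0"
| "arrow_contrib n L i m h (Pth i' j k) =
     (if i' = i \<and> j \<le> m \<and> m < k
      then mult n L (bv (subp L i j m)) (mult n L h (bv (subp L i (Suc m) k))) else 0)"

definition arrow_der :: "nat \<Rightarrow> (nat \<Rightarrow> nat) \<Rightarrow> nat \<Rightarrow> nat \<Rightarrow> (path \<Rightarrow> complex)
    \<Rightarrow> (path \<Rightarrow> complex) \<Rightarrow> (path \<Rightarrow> complex)" where
  "arrow_der n L i m h x = (\<Sum>p\<in>paths n L. scal (x p) (arrow_contrib n L i m h p))"

definition y_der :: "nat \<Rightarrow> (nat \<Rightarrow> nat) \<Rightarrow> nat \<Rightarrow> (path \<Rightarrow> complex) \<Rightarrow> (path \<Rightarrow> complex)" where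
  "y_der n L i = arrow_der n L i 0 (bv (Pth i 0 1))"

text \<open>Branches containing monomial relations: some path inside the branch lies in I.\<close>
definition mono_branches :: "nat \<Rightarrow> (nat \<Rightarrow> nat) \<Rightarrow> (path \<Rightarrow> complex) set \<Rightarrow> nat set" where
  "mono_branches n L I = {i. i < n \<and> (\<exists>j k. j < k \<and> k \<le> L i \<and> bv (Pth i j k) \<in> I)}"

text \<open>The class of d lies in the centre of the Lie algebra HH^1(A): its commutator with
every derivation is inner.\<close>
definition hh1_central :: "nat \<Rightarrow> (nat \<Rightarrow> nat) \<Rightarrow> (path \<Rightarrow> complex) set
    \<Rightarrow> ((path \<Rightarrow> complex) \<Rightarrow> (path \<Rightarrow> complex)) \<Rightarrow> bool" where
  "hh1_central n L I d \<longleftrightarrow>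
     (\<forall>d'. is_der n L I d' \<longrightarrow>
        (\<exists>e. in_E n L e \<and> (\<forall>x\<in>CQ n L. d (d' x) - d' (d x) - inner_der n L e x \<in> I)))"

definition in_span_y :: "nat \<Rightarrow> (nat \<Rightarrow> nat) \<Rightarrow> (path \<Rightarrow> complex) set \<Rightarrow> nat set
    \<Rightarrow> ((path \<Rightarrow> complex) \<Rightarrow> (path \<Rightarrow> complex)) \<Rightarrow> bool" where
  "in_span_y n L I S d \<longleftrightarrow>
     (\<exists>(c :: nat \<Rightarrow> complex) e. in_E n L e \<and>
        (\<forall>x\<in>CQ n L. d x - (\<Sum>i\<in>S. scal (c i) (y_der n L i x)) - inner_der n L e x \<in> I))"

end

theory Submission
  imports Defs
begin


lemma finite_vertices: "finite (vertices n L)"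
proof -
  have "{Mid i j | i j. i < n \<and> 0 < j \<and> j < L i} = (\<Union>i\<in>{..<n}. Mid i ` {0<..<L i})" by auto
  thus ?thesis unfolding vertices_def by auto
qed

lemma finite_paths: "finite (paths n L)"
proof -
  have "{Pth i j k | i j k. i < n \<and> j < k \<and> k \<le> L i} = (\<Union>i\<in>{..<n}. \<Union>k\<in>{..L i}. (\<lambda>j. Pth i j k) ` {..<k})" by auto
  thus ?thesis unfolding paths_def using finite_vertices by auto
qed

lemma Pth_in_paths[simp]: "Pth i j k \<in> paths n L \<longleftrightarrow> i < n \<and> j < k \<and> k \<le> L i"
  by (auto simp: paths_def)

lemma Triv_in_paths[simp]: "Triv v \<in> paths n L \<longleftrightarrow> v \<in> vertices n L"
  by (auto simp: paths_def)

lemma vpos_in_vertices: "i < n \<Longrightarrow> j \<le> L i \<Longrightarrow> vpos L i j \<in> vertices n L"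
  by (auto simp: vpos_def vertices_def)

lemma mult_notP: "r \<notin> paths n L \<Longrightarrow> mult n L x y r = 0"
proof -
  assume r: "r \<notin> paths n L"
  have "\<And>p q. p \<in> paths n L \<Longrightarrow> q \<in> paths n L \<Longrightarrow> ptgt L p = psrc L q \<Longrightarrow> pcomp p q \<noteq> r"
  proof -
    fix p q assume pq: "p \<in> paths n L" "q \<in> paths n L" "ptgt L p = psrc L q"
    have "pcomp p q \<in> paths n L"
    proof (cases p)
      case (Triv v) thus ?thesis using pq by simp
    next
      case (Pth i j k)
      show ?thesis
      proof (cases q)
        case (Triv v') thus ?thesis using pq Pth by simp
      next
        case (Pth i' j' k')
        thus ?thesis using pq \<open>p = Pth i j k\<close> by (auto simp: vpos_def split: if_splits)
      qed
    qed
    thus "pcomp p q \<noteq> r" using r by auto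
  qed
  note * = this
  show ?thesis unfolding mult_def
  proof (rule sum.neutral, clarify)
    fix p q assume "p \<in> paths n L" "q \<in> paths n L"
    thus "(if ptgt L p = psrc L q \<and> pcomp p q = r then x p * y q else 0) = 0" using * by auto
  qed
qed

lemma mult_Triv: "v \<in> vertices n L \<Longrightarrow> mult n L x y (Triv v) = x (Triv v) * y (Triv v)"
proof -
  assume v: "v \<in> vertices n L"
  have S: "{pq \<in> paths n L \<times> paths n L. ptgt L (fst pq) = psrc L (snd pq) \<and> pcomp (fst pq) (snd pq) = Triv v}
     = {(Triv v, Triv v)}"
  proof (rule set_eqI, rule iffI)
    fix pq assume "pq \<in> {pq \<in> paths n L \<times> paths n L. ptgt L (fst pq) = psrc L (snd pq) \<and> pcomp (fst pq) (snd pq) = Triv v}"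
    then obtain p q where pq: "pq = (p,q)" "ptgt L p = psrc L q" "pcomp p q = Triv v" by auto
    thus "pq \<in> {(Triv v, Triv v)}"
      by (cases p; cases q) auto
  qed (use v in auto)
  have "mult n L x y (Triv v) = (\<Sum>pq\<in>paths n L \<times> paths n L. if ptgt L (fst pq) = psrc L (snd pq) \<and> pcomp (fst pq) (snd pq) = Triv v then x (fst pq) * y (snd pq) else 0)"
    unfolding mult_def by (simp add: case_prod_beta)
  also have "\<dots> = (\<Sum>pq\<in>{pq \<in> paths n L \<times> paths n L. ptgt L (fst pq) = psrc L (snd pq) \<and> pcomp (fst pq) (snd pq) = Triv v}. x (fst pq) * y (snd pq))"
    by (subst sum.inter_filter[symmetric]) (auto simp: finite_paths)
  also have "\<dots> = x (Triv v) * y (Triv v)" unfolding S by simp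
  finally show ?thesis .
qed

lemma mult_Pth: assumes r: "Pth i j k \<in> paths n L"
  shows "mult n L x y (Pth i j k) = x (Triv (vpos L i j)) * y (Pth i j k) + x (Pth i j k) * y (Triv (vpos L i k))
       + (\<Sum>m\<in>{j<..<k}. x (Pth i j m) * y (Pth i m k))"
proof -
  let ?C = "\<lambda>pq. ptgt L (fst pq) = psrc L (snd pq) \<and> pcomp (fst pq) (snd pq) = Pth i j k"
  let ?A = "{(Triv (vpos L i j), Pth i j k)}"
  let ?B = "{(Pth i j k, Triv (vpos L i k))}"
  let ?M = "(\<lambda>m. (Pth i j m, Pth i m k)) ` {j<..<k}"
  have ri: "i < n" "j < k" "k \<le> L i" using r by auto
  have S: "{pq \<in> paths n L \<times> paths n L. ?C pq} = ?A \<union> ?B \<union> ?M"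
  proof (rule set_eqI, rule iffI)
    fix pq assume "pq \<in> {pq \<in> paths n L \<times> paths n L. ?C pq}"
    then obtain p q where pq: "pq = (p,q)" "p \<in> paths n L" "q \<in> paths n L" "ptgt L p = psrc L q" "pcomp p q = Pth i j k" by auto
    show "pq \<in> ?A \<union> ?B \<union> ?M"
    proof (cases p)
      case (Triv v) thus ?thesis using pq by auto
    next
      case (Pth i1 j1 k1)
      show ?thesis
      proof (cases q)
        case (Triv v) thus ?thesis using pq Pth by auto
      next
        case (Pth i2 j2 k2)
        have e: "i1 = i" "j1 = j" "k2 = k" using pq \<open>p = Pth i1 j1 k1\<close> Pth by auto
        have "vpos L i k1 = vpos L i2 j2" using pq \<open>p = Pth i1 j1 k1\<close> Pth e by auto
        moreover have "j < k1" "k1 \<le> L i" "i2 < n" "j2 < k" "k \<le> L i2"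
          using pq \<open>p = Pth i1 j1 k1\<close> Pth e by auto
        ultimately have "i2 = i \<and> j2 = k1" by (auto simp: vpos_def split: if_splits)
        thus ?thesis using pq \<open>p = Pth i1 j1 k1\<close> Pth e \<open>j < k1\<close> \<open>j2 < k\<close> by auto
      qed
    qed
  next
    fix pq assume "pq \<in> ?A \<union> ?B \<union> ?M"
    moreover have "vpos L i j \<in> vertices n L" "vpos L i k \<in> vertices n L"
      using ri by (auto intro: vpos_in_vertices)
    ultimately show "pq \<in> {pq \<in> paths n L \<times> paths n L. ?C pq}" using ri by auto
  qed
  have "mult n L x y (Pth i j k) = (\<Sum>pq\<in>paths n L \<times> paths n L. if ?C pq then x (fst pq) * y (snd pq) else 0)"
    unfolding mult_def by (simp add: case_prod_beta)
  also have "\<dots> = (\<Sum>pq\<in>{pq \<in> paths n L \<times> paths n L. ?C pq}. x (fst pq) * y (snd pq))"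
    by (subst sum.inter_filter[symmetric]) (auto simp: finite_paths)
  also have "\<dots> = (\<Sum>pq\<in>?A \<union> ?B \<union> ?M. x (fst pq) * y (snd pq))" unfolding S ..
  also have "\<dots> = (\<Sum>pq\<in>?A \<union> ?B. x (fst pq) * y (snd pq)) + (\<Sum>pq\<in>?M. x (fst pq) * y (snd pq))"
    by (rule sum.union_disjoint) auto
  also have "(\<Sum>pq\<in>?A \<union> ?B. x (fst pq) * y (snd pq)) = x (Triv (vpos L i j)) * y (Pth i j k) + x (Pth i j k) * y (Triv (vpos L i k))"
    by (subst sum.union_disjoint) auto
  also have "(\<Sum>pq\<in>?M. x (fst pq) * y (snd pq)) = (\<Sum>m\<in>{j<..<k}. x (Pth i j m) * y (Pth i m k))"
    by (subst sum.reindex) (auto simp: inj_on_def)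
  finally show ?thesis .
qed



lemma sum_fun_apply: "(\<Sum>i\<in>A. f i) x = (\<Sum>i\<in>A. f i x)"
  by (induction A rule: infinite_finite_induct) auto

lemma scal_apply[simp]: "scal c x r = c * x r" by (simp add: scal_def)
lemma bv_apply: "bv p r = (if r = p then 1 else 0)" by (simp add: bv_def)

lemma mult_add_left: "mult n L (x + y) z = mult n L x z + mult n L y z"
  unfolding mult_def by (rule ext) (simp add: sum.distrib[symmetric] algebra_simps case_prod_beta if_distrib cong: if_cong)
lemma mult_add_right: "mult n L z (x + y) = mult n L z x + mult n L z y"
  unfolding mult_def by (rule ext) (simp add: sum.distrib[symmetric] algebra_simps case_prod_beta if_distrib cong: if_cong)
lemma mult_diff_left: "mult n L (x - y) z = mult n L x z - mult n L y z"
  unfolding mult_def by (rule ext) (simp add: sum_subtractf[symmetric] algebra_simps case_prod_beta if_distrib cong: if_cong)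
lemma mult_diff_right: "mult n L z (x - y) = mult n L z x - mult n L z y"
  unfolding mult_def by (rule ext) (simp add: sum_subtractf[symmetric] algebra_simps case_prod_beta if_distrib cong: if_cong)
lemma mult_scal_left: "mult n L (scal c x) z = scal c (mult n L x z)"
  unfolding mult_def by (rule ext) (simp add: sum_distrib_left algebra_simps case_prod_beta if_distrib cong: if_cong)
lemma mult_scal_right: "mult n L z (scal c x) = scal c (mult n L z x)"
  unfolding mult_def by (rule ext) (simp add: sum_distrib_left algebra_simps case_prod_beta if_distrib cong: if_cong)
lemma mult_zero_left[simp]: "mult n L 0 z = 0"
  using mult_diff_left[of n L z z z] by simp
lemma mult_zero_right[simp]: "mult n L z 0 = 0"
  using mult_diff_right[of n L z z z] by simp

lemma mult_in_CQ: "mult n L x y \<in> CQ n L"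
  unfolding CQ_def using mult_notP by auto
lemma CQ_add: "x \<in> CQ n L \<Longrightarrow> y \<in> CQ n L \<Longrightarrow> x + y \<in> CQ n L" by (auto simp: CQ_def)
lemma CQ_diff: "x \<in> CQ n L \<Longrightarrow> y \<in> CQ n L \<Longrightarrow> x - y \<in> CQ n L" by (auto simp: CQ_def)
lemma CQ_scal: "x \<in> CQ n L \<Longrightarrow> scal c x \<in> CQ n L" by (auto simp: CQ_def)
lemma CQ_zero[simp]: "0 \<in> CQ n L" by (auto simp: CQ_def)
lemma CQ_bv: "p \<in> paths n L \<Longrightarrow> bv p \<in> CQ n L" by (auto simp: CQ_def bv_def)
lemma CQ_sum: "(\<And>i. i \<in> A \<Longrightarrow> f i \<in> CQ n L) \<Longrightarrow> (\<Sum>i\<in>A. f i) \<in> CQ n L"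
  by (induction A rule: infinite_finite_induct) (auto intro: CQ_add)

lemma CQ_expand: "x \<in> CQ n L \<Longrightarrow> x = (\<Sum>p\<in>paths n L. scal (x p) (bv p))"
proof (rule ext)
  fix r assume x: "x \<in> CQ n L"
  have "(\<Sum>p\<in>paths n L. scal (x p) (bv p)) r = (\<Sum>p\<in>paths n L. x p * (if r = p then 1 else 0))"
    by (simp add: sum_fun_apply bv_apply)
  also have "\<dots> = (if r \<in> paths n L then x r else 0)"
    by (simp add: if_distrib finite_paths cong: if_cong)
  also have "\<dots> = x r" using x by (auto simp: CQ_def)
  finally show "x r = (\<Sum>p\<in>paths n L. scal (x p) (bv p)) r" by simp
qed

section \<open>The ideal\<close>

lemma I_zero[simp]: "0 \<in> gen_ideal n L G" by (rule gen_ideal.zero)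
lemma I_add: "x \<in> gen_ideal n L G \<Longrightarrow> y \<in> gen_ideal n L G \<Longrightarrow> x + y \<in> gen_ideal n L G"
  by (rule gen_ideal.add)
lemma I_scal: "x \<in> gen_ideal n L G \<Longrightarrow> scal c x \<in> gen_ideal n L G"
  by (rule gen_ideal.smult)
lemma I_uminus: "x \<in> gen_ideal n L G \<Longrightarrow> - x \<in> gen_ideal n L G"
proof -
  assume "x \<in> gen_ideal n L G"
  hence "scal (-1) x \<in> gen_ideal n L G" by (rule I_scal)
  moreover have "scal (-1) x = - x" by (rule ext) simp
  ultimately show ?thesis by simp
qed
lemma I_diff: "x \<in> gen_ideal n L G \<Longrightarrow> y \<in> gen_ideal n L G \<Longrightarrow> x - y \<in> gen_ideal n L G"
  using I_add[of x n L G "- y"] I_uminus[of y n L G] by simp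
lemma I_sum: "(\<And>i. i \<in> A \<Longrightarrow> f i \<in> gen_ideal n L G) \<Longrightarrow> (\<Sum>i\<in>A. f i) \<in> gen_ideal n L G"
  by (induction A rule: infinite_finite_induct) (auto intro: I_add)
lemma I_lmult: "x \<in> gen_ideal n L G \<Longrightarrow> a \<in> CQ n L \<Longrightarrow> mult n L a x \<in> gen_ideal n L G"
  by (rule gen_ideal.lmult)
lemma I_rmult: "x \<in> gen_ideal n L G \<Longrightarrow> a \<in> CQ n L \<Longrightarrow> mult n L x a \<in> gen_ideal n L G"
  by (rule gen_ideal.rmult)
lemma I_eq: "x \<in> gen_ideal n L G \<Longrightarrow> x = y \<Longrightarrow> y \<in> gen_ideal n L G" by simp

lemma nm_apply: "(\<Sum>i<n. scal (c i) (bv (branch L i))) r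
   = (\<Sum>i<n. if r = Pth i 0 (L i) then c i else 0)"
  by (simp add: sum_fun_apply bv_apply branch_def if_distrib cong: if_cong)

lemma nm_Pth: "(\<Sum>i<n. scal (c i) (bv (branch L i))) (Pth i0 j k)
   = (if i0 < n \<and> j = 0 \<and> k = L i0 then c i0 else 0)"
proof -
  have "(\<Sum>i<n. if Pth i0 j k = Pth i 0 (L i) then c i else 0)
      = (\<Sum>i\<in>{..<n}. if i = i0 then (if j = 0 \<and> k = L i0 then c i0 else 0) else 0)"
    by (rule sum.cong) auto
  also have "\<dots> = (if i0 < n \<and> j = 0 \<and> k = L i0 then c i0 else 0)" by auto
  finally show ?thesis by (simp add: nm_apply)
qed

lemma nm_Triv: "(\<Sum>i<n. scal (c i) (bv (branch L i))) (Triv v) = 0"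
  by (simp add: nm_apply)

lemma ioo_Suc_empty[simp]: "{j<..<Suc j} = ({}::nat set)" by auto

lemma I_props:
  assumes L1: "\<forall>i<n. 1 \<le> L i" and tg: "toupie_generators n L G" and x: "x \<in> gen_ideal n L G"
  shows "x \<in> CQ n L \<and> (\<forall>v. x (Triv v) = 0) \<and> (\<forall>i j. x (Pth i j (Suc j)) = 0)"
  using x
proof (induction rule: gen_ideal.induct)
  case (gen g)
  from tg gen consider (m) i j k where "i < n" "j < k" "k \<le> L i" "2 \<le> k - j" "g = bv (Pth i j k)"
    | (nm) c where "\<forall>i<n. L i = 1 \<longrightarrow> c i = 0" "g = (\<Sum>i<n. scal (c i) (bv (branch L i)))"
    unfolding toupie_generators_def by blast
  thus ?case
  proof cases
    case m
    have "g \<in> CQ n L" using m by (simp add: CQ_bv)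
    moreover have "\<forall>v. g (Triv v) = 0" "\<forall>i j. g (Pth i j (Suc j)) = 0" using m by (auto simp: bv_apply)
    ultimately show ?thesis by blast
  next
    case nm
    have "g \<in> CQ n L" unfolding nm(2) by (rule CQ_sum, rule CQ_scal, rule CQ_bv) (use L1 in \<open>auto simp: branch_def\<close>)
    moreover have "\<forall>i j. g (Pth i j (Suc j)) = 0" using nm by (auto simp: nm_Pth)
    ultimately show ?thesis using nm by (simp add: nm_Triv)
  qed
next
  case zero thus ?case by (simp add: CQ_def)
next
  case (add x y) thus ?case by (simp add: CQ_def)
next
  case (smult x c) thus ?case by (simp add: CQ_def)
next
  case (lmult x a)
  have "\<forall>v. mult n L a x (Triv v) = 0"
  proof
    fix v show "mult n L a x (Triv v) = 0"
      using lmult by (cases "v \<in> vertices n L") (auto simp: mult_Triv mult_notP)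
  qed
  moreover have "\<forall>i j. mult n L a x (Pth i j (Suc j)) = 0"
  proof (intro allI)
    fix i j show "mult n L a x (Pth i j (Suc j)) = 0"
      using lmult by (cases "Pth i j (Suc j) \<in> paths n L") (auto simp: mult_Pth mult_notP)
  qed
  ultimately show ?case by (simp add: mult_in_CQ)
next
  case (rmult x a)
  have "\<forall>v. mult n L x a (Triv v) = 0"
  proof
    fix v show "mult n L x a (Triv v) = 0"
      using rmult by (cases "v \<in> vertices n L") (auto simp: mult_Triv mult_notP)
  qed
  moreover have "\<forall>i j. mult n L x a (Pth i j (Suc j)) = 0"
  proof (intro allI)
    fix i j show "mult n L x a (Pth i j (Suc j)) = 0"
      using rmult by (cases "Pth i j (Suc j) \<in> paths n L") (auto simp: mult_Pth mult_notP)
  qed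
  ultimately show ?case by (simp add: mult_in_CQ)
qed



lemma mult_vtx_left: assumes v: "v \<in> vertices n L"
  shows "mult n L (bv (Triv v)) y r = (if r \<in> paths n L \<and> psrc L r = v then y r else 0)"
proof (cases "r \<in> paths n L")
  case False thus ?thesis by (simp add: mult_notP)
next
  case True
  show ?thesis
  proof (cases r)
    case (Triv w) thus ?thesis using True by (auto simp: mult_Triv bv_apply)
  next
    case (Pth i j k) thus ?thesis using True by (auto simp: mult_Pth bv_apply)
  qed
qed

lemma mult_vtx_right: assumes v: "v \<in> vertices n L"
  shows "mult n L y (bv (Triv v)) r = (if r \<in> paths n L \<and> ptgt L r = v then y r else 0)"
proof (cases "r \<in> paths n L")
  case False thus ?thesis by (simp add: mult_notP)
next
  case True
  show ?thesis
  proof (cases r)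
    case (Triv w) thus ?thesis using True by (auto simp: mult_Triv bv_apply)
  next
    case (Pth i j k) thus ?thesis using True by (auto simp: mult_Pth bv_apply)
  qed
qed

lemma mult_bv: assumes p: "p \<in> paths n L" and q: "q \<in> paths n L" and c: "ptgt L p = psrc L q"
  shows "mult n L (bv p) (bv q) = bv (pcomp p q)"
proof (rule ext)
  fix r
  have "mult n L (bv p) (bv q) r = (\<Sum>pq\<in>paths n L \<times> paths n L.
      if ptgt L (fst pq) = psrc L (snd pq) \<and> pcomp (fst pq) (snd pq) = r then bv p (fst pq) * bv q (snd pq) else 0)"
    unfolding mult_def by (simp add: case_prod_beta)
  also have "\<dots> = (\<Sum>pq\<in>paths n L \<times> paths n L. if pq = (p, q) then (if pcomp p q = r then 1 else 0) else 0)"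
    by (rule sum.cong) (auto simp: bv_apply c)
  also have "\<dots> = (if pcomp p q = r then 1 else 0)" using p q by (simp add: finite_paths)
  also have "\<dots> = bv (pcomp p q) r" by (auto simp: bv_apply)
  finally show "mult n L (bv p) (bv q) r = bv (pcomp p q) r" .
qed

section \<open>Weight derivations\<close>

definition Wd :: "nat \<Rightarrow> (nat \<Rightarrow> nat) \<Rightarrow> (path \<Rightarrow> complex) \<Rightarrow> (path \<Rightarrow> complex) \<Rightarrow> (path \<Rightarrow> complex)" where
  "Wd n L w x = (\<lambda>r. if r \<in> paths n L then w r * x r else 0)"

definition wadd :: "(path \<Rightarrow> complex) \<Rightarrow> bool" where
  "wadd w \<longleftrightarrow> (\<forall>v. w (Triv v) = 0) \<and> (\<forall>i j m k. j < m \<longrightarrow> m < k \<longrightarrow> w (Pth i j k) = w (Pth i j m) + w (Pth i m k))"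

lemma Wd_apply: "Wd n L w x r = (if r \<in> paths n L then w r * x r else 0)" by (simp add: Wd_def)

lemma Wd_CQ: "Wd n L w x \<in> CQ n L" by (simp add: Wd_def CQ_def)
lemma Wd_add: "Wd n L w (x + y) = Wd n L w x + Wd n L w y" by (rule ext) (simp add: Wd_def algebra_simps)
lemma Wd_diff: "Wd n L w (x - y) = Wd n L w x - Wd n L w y" by (rule ext) (simp add: Wd_def algebra_simps)
lemma Wd_scal: "Wd n L w (scal c x) = scal c (Wd n L w x)" by (rule ext) (simp add: Wd_def algebra_simps)
lemma Wd_zero: "Wd n L w 0 = 0" by (rule ext) (simp add: Wd_def)
lemma Wd_bv: "p \<in> paths n L \<Longrightarrow> Wd n L w (bv p) = scal (w p) (bv p)"
  by (rule ext) (simp add: Wd_def bv_apply)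

lemma Wd_Leibniz: assumes w: "wadd w"
  shows "Wd n L w (mult n L x y) = mult n L (Wd n L w x) y + mult n L x (Wd n L w y)"
proof (rule ext)
  fix r
  show "Wd n L w (mult n L x y) r = (mult n L (Wd n L w x) y + mult n L x (Wd n L w y)) r"
  proof (cases "r \<in> paths n L")
    case False thus ?thesis by (simp add: Wd_def mult_notP)
  next
    case True
    show ?thesis
    proof (cases r)
      case (Triv v) thus ?thesis using True w by (simp add: Wd_def mult_Triv wadd_def)
    next
      case (Pth i j k)
      have ik: "i < n" "j < k" "k \<le> L i" using True Pth by auto
      have vs: "vpos L i j \<in> vertices n L" "vpos L i k \<in> vertices n L" using ik by (auto intro: vpos_in_vertices)
      have S1: "(\<Sum>m\<in>{j<..<k}. Wd n L w x (Pth i j m) * y (Pth i m k)) = (\<Sum>m\<in>{j<..<k}. w (Pth i j m) * x (Pth i j m) * y (Pth i m k))"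
        by (rule sum.cong) (use ik in \<open>auto simp: Wd_def\<close>)
      have S2: "(\<Sum>m\<in>{j<..<k}. x (Pth i j m) * Wd n L w y (Pth i m k)) = (\<Sum>m\<in>{j<..<k}. w (Pth i m k) * x (Pth i j m) * y (Pth i m k))"
        by (rule sum.cong) (use ik in \<open>auto simp: Wd_def\<close>)
      have S3: "w (Pth i j k) * (\<Sum>m\<in>{j<..<k}. x (Pth i j m) * y (Pth i m k)) =
          (\<Sum>m\<in>{j<..<k}. w (Pth i j m) * x (Pth i j m) * y (Pth i m k)) + (\<Sum>m\<in>{j<..<k}. w (Pth i m k) * x (Pth i j m) * y (Pth i m k))"
        unfolding sum_distrib_left sum.distrib[symmetric]
        by (rule sum.cong) (use w in \<open>auto simp: wadd_def algebra_simps\<close>)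
      show ?thesis using True Pth ik vs w
        by (simp add: mult_Pth Wd_def S1 S2 S3 wadd_def algebra_simps)
    qed
  qed
qed

definition wcond :: "nat \<Rightarrow> (nat \<Rightarrow> nat) \<Rightarrow> (path \<Rightarrow> complex) set \<Rightarrow> (path \<Rightarrow> complex) \<Rightarrow> bool" where
  "wcond n L G w \<longleftrightarrow> (\<exists>\<Lambda>. \<forall>k<n. w (branch L k) = \<Lambda> \<or> bv (branch L k) \<in> gen_ideal n L G \<or> L k = 1)"

lemma Wd_pres:
  assumes L1: "\<forall>i<n. 1 \<le> L i" and tg: "toupie_generators n L G" and w: "wadd w" and wc: "wcond n L G w"
    and x: "x \<in> gen_ideal n L G"
  shows "Wd n L w x \<in> gen_ideal n L G"
  using x
proof (induction rule: gen_ideal.induct)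
  case (gen g)
  from tg gen consider (m) i j k where "i < n" "j < k" "k \<le> L i" "2 \<le> k - j" "g = bv (Pth i j k)"
    | (nm) c where "\<forall>i<n. L i = 1 \<longrightarrow> c i = 0" "g = (\<Sum>i<n. scal (c i) (bv (branch L i)))"
    unfolding toupie_generators_def by blast
  thus ?case
  proof cases
    case m
    hence "Wd n L w g = scal (w (Pth i j k)) g" by (simp add: Wd_bv)
    thus ?thesis using gen by (metis I_scal gen_ideal.gen)
  next
    case nm
    from wc obtain \<Lambda> where La: "\<forall>k<n. w (branch L k) = \<Lambda> \<or> bv (branch L k) \<in> gen_ideal n L G \<or> L k = 1"
      unfolding wcond_def by blast
    have eq: "Wd n L w g = scal \<Lambda> g + (\<Sum>k<n. scal (c k * (w (branch L k) - \<Lambda>)) (bv (branch L k)))"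
    proof (rule ext)
      fix r
      show "Wd n L w g r = (scal \<Lambda> g + (\<Sum>k<n. scal (c k * (w (branch L k) - \<Lambda>)) (bv (branch L k)))) r"
      proof (cases "r \<in> paths n L")
        case True
        have "Wd n L w g r = w r * (\<Sum>k<n. if r = Pth k 0 (L k) then c k else 0)"
          using True by (simp add: Wd_def nm(2) nm_apply)
        also have "\<dots> = (\<Sum>k<n. if r = Pth k 0 (L k) then c k * w (branch L k) else 0)"
          by (simp add: sum_distrib_left branch_def if_distrib mult.commute cong: if_cong)
        also have "\<dots> = (\<Sum>k<n. \<Lambda> * (if r = Pth k 0 (L k) then c k else 0) + (if r = Pth k 0 (L k) then c k * (w (branch L k) - \<Lambda>) else 0))"
          by (rule sum.cong) (auto simp: algebra_simps)
        also have "\<dots> = \<Lambda> * (\<Sum>k<n. if r = Pth k 0 (L k) then c k else 0) + (\<Sum>k<n. if r = Pth k 0 (L k) then c k * (w (branch L k) - \<Lambda>) else 0)"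
          by (simp only: sum.distrib sum_distrib_left)
        also have "\<dots> = (scal \<Lambda> g + (\<Sum>k<n. scal (c k * (w (branch L k) - \<Lambda>)) (bv (branch L k)))) r"
          by (simp add: nm(2) nm_apply sum_fun_apply bv_apply branch_def if_distrib cong: if_cong)
        finally show ?thesis .
      next
        case False
        hence "\<forall>k<n. r \<noteq> Pth k 0 (L k)" using L1 by auto
        thus ?thesis using False by (simp add: Wd_def nm(2) nm_apply sum_fun_apply bv_apply branch_def)
      qed
    qed
    have "scal \<Lambda> g \<in> gen_ideal n L G" using gen by (intro I_scal gen_ideal.gen)
    moreover have "(\<Sum>k<n. scal (c k * (w (branch L k) - \<Lambda>)) (bv (branch L k))) \<in> gen_ideal n L G"
    proof (rule I_sum)
      fix k assume k: "k \<in> {..<n}"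
      show "scal (c k * (w (branch L k) - \<Lambda>)) (bv (branch L k)) \<in> gen_ideal n L G"
      proof (cases "w (branch L k) = \<Lambda> \<or> L k = 1")
        case True
        hence "scal (c k * (w (branch L k) - \<Lambda>)) (bv (branch L k)) = 0" using nm(1) k
          by (auto simp: fun_eq_iff)
        thus ?thesis by simp
      next
        case False thus ?thesis using La k by (auto intro: I_scal)
      qed
    qed
    ultimately show ?thesis unfolding eq by (rule I_add)
  qed
next
  case zero thus ?case by (simp only: Wd_zero I_zero)
next
  case (add x y) thus ?case by (simp only: Wd_add I_add)
next
  case (smult x c) thus ?case by (simp only: Wd_scal I_scal)
next
  case (lmult x a)
  have "Wd n L w (mult n L a x) = mult n L (Wd n L w a) x + mult n L a (Wd n L w x)" by (rule Wd_Leibniz[OF w])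
  thus ?case using lmult by (metis I_add I_lmult I_rmult Wd_CQ)
next
  case (rmult x a)
  have "Wd n L w (mult n L x a) = mult n L (Wd n L w x) a + mult n L x (Wd n L w a)" by (rule Wd_Leibniz[OF w])
  thus ?case using rmult by (metis I_add I_lmult I_rmult Wd_CQ)
qed

lemma Wd_is_der:
  assumes L1: "\<forall>i<n. 1 \<le> L i" and tg: "toupie_generators n L G" and w: "wadd w" and wc: "wcond n L G w"
  shows "is_der n L (gen_ideal n L G) (Wd n L w)"
  unfolding is_der_def
proof (intro conjI ballI allI impI)
  fix x y assume "x - y \<in> gen_ideal n L G"
  hence "Wd n L w (x - y) \<in> gen_ideal n L G" by (rule Wd_pres[OF L1 tg w wc])
  thus "Wd n L w x - Wd n L w y \<in> gen_ideal n L G" by (simp only: Wd_diff)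
next
  fix v assume "v \<in> vertices n L"
  hence "Wd n L w (bv (Triv v)) = 0" using w by (simp add: Wd_bv wadd_def fun_eq_iff)
  thus "Wd n L w (bv (Triv v)) \<in> gen_ideal n L G" by simp
qed (auto simp: Wd_CQ Wd_add Wd_scal Wd_Leibniz[OF w])



definition wt :: "(nat \<Rightarrow> nat) \<Rightarrow> nat set \<Rightarrow> (nat \<Rightarrow> complex) \<Rightarrow> (vtx \<Rightarrow> complex) \<Rightarrow> path \<Rightarrow> complex" where
  "wt L M c pot r = (\<Sum>i\<in>M. if (\<exists>k. r = Pth i 0 k) then c i else 0) + (pot (psrc L r) - pot (ptgt L r))"

lemma wt_Pth_sum: assumes fM: "finite M" shows "(\<Sum>i\<in>M. if (\<exists>k'. Pth i' j k = Pth i 0 k') then c i else 0) = (if i' \<in> M \<and> j = 0 then c i' else 0)"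
proof -
  have "(\<Sum>i\<in>M. if (\<exists>k'. Pth i' j k = Pth i 0 k') then c i else 0) = (\<Sum>i\<in>M. if i = i' then (if j = 0 then c i' else 0) else 0)"
    by (rule sum.cong) auto
  also have "\<dots> = (if i' \<in> M \<and> j = 0 then c i' else 0)"
    using fM by (auto simp: sum.delta)
  finally show ?thesis .
qed

lemma wt_Pth: "wt L M c pot (Pth i' j k) = (if i' \<in> M \<and> j = 0 \<and> finite M then c i' else 0) + (pot (vpos L i' j) - pot (vpos L i' k))"
proof -
  have "(\<Sum>i\<in>M. if (\<exists>k'. Pth i' j k = Pth i 0 k') then c i else 0) = (if i' \<in> M \<and> j = 0 \<and> finite M then c i' else 0)"
  proof (cases "finite M")
    case True thus ?thesis using wt_Pth_sum[OF True, of i' j k c] by simp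
  qed simp
  thus ?thesis by (simp add: wt_def)
qed

lemma wt_Triv: "wt L M c pot (Triv v) = 0" by (simp add: wt_def)

lemma wadd_wt: "wadd (wt L M c pot)"
  unfolding wadd_def by (auto simp: wt_Triv wt_Pth)

lemma y_contrib:
  assumes i: "i < n" "1 \<le> L i" and p: "p \<in> paths n L"
  shows "arrow_contrib n L i 0 (bv (Pth i 0 1)) p = (if \<exists>k. p = Pth i 0 k then bv p else 0)"
proof (cases p)
  case (Triv v) thus ?thesis by simp
next
  case (Pth i' j k)
  show ?thesis
  proof (cases "i' = i \<and> j = 0")
    case False thus ?thesis using Pth by auto
  next
    case True
    hence pe: "p = Pth i 0 k" and k: "0 < k" "k \<le> L i" using Pth p by auto
    have src: "subp L i 0 0 = Triv Src" by (simp add: subp_def vpos_def)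
    have a: "Pth i 0 1 \<in> paths n L" using i by simp
    have S: "Src \<in> vertices n L" by (simp add: vertices_def)
    have inner: "mult n L (bv (Pth i 0 1)) (bv (subp L i 1 k)) = bv (Pth i 0 k)"
    proof (cases "k = 1")
      case True
      have "vpos L i 1 \<in> vertices n L" using i by (intro vpos_in_vertices) auto
      thus ?thesis using True a by (simp add: subp_def mult_bv)
    next
      case False thus ?thesis using a k i by (simp add: subp_def mult_bv)
    qed
    have "mult n L (bv (Triv Src)) (bv (Pth i 0 k)) = bv (Pth i 0 k)"
      using S k i by (subst mult_bv) (auto simp: vpos_def)
    thus ?thesis using pe inner src k by simp
  qed
qed

lemma y_der_eq:
  assumes i: "i < n" "1 \<le> L i"
  shows "y_der n L i x = Wd n L (\<lambda>r. if \<exists>k. r = Pth i 0 k then 1 else 0) x"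
proof (rule ext)
  fix r
  have "y_der n L i x r = (\<Sum>p\<in>paths n L. x p * arrow_contrib n L i 0 (bv (Pth i 0 1)) p r)"
    by (simp add: y_der_def arrow_der_def sum_fun_apply)
  also have "\<dots> = (\<Sum>p\<in>paths n L. if p = r then (if \<exists>k. r = Pth i 0 k then x r else 0) else 0)"
  proof (rule sum.cong)
    fix p assume p: "p \<in> paths n L"
    show "x p * arrow_contrib n L i 0 (bv (Pth i 0 1)) p r = (if p = r then (if \<exists>k. r = Pth i 0 k then x r else 0) else 0)"
      unfolding y_contrib[OF i p] by (auto simp: bv_apply)
  qed simp
  also have "\<dots> = Wd n L (\<lambda>r. if \<exists>k. r = Pth i 0 k then 1 else 0) x r"
    by (simp add: Wd_def finite_paths)
  finally show "y_der n L i x r = Wd n L (\<lambda>r. if \<exists>k. r = Pth i 0 k then 1 else 0) x r" .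
qed

lemma delta_contrib:
  assumes a: "a < n" "L a = 1" and b: "b < n" "1 \<le> L b" and p: "p \<in> paths n L"
  shows "arrow_contrib n L a 0 (bv (Pth b 0 (L b))) p = (if p = Pth a 0 1 then bv (Pth b 0 (L b)) else 0)"
proof (cases p)
  case (Triv v) thus ?thesis by simp
next
  case (Pth i' j k)
  show ?thesis
  proof (cases "i' = a \<and> j = 0")
    case False thus ?thesis using Pth by auto
  next
    case True
    hence pe: "p = Pth a 0 1" using Pth p a by auto
    have src: "subp L a 0 0 = Triv Src" by (simp add: subp_def vpos_def)
    have snk: "subp L a 1 1 = Triv Snk" using a by (simp add: subp_def vpos_def)
    have S: "Src \<in> vertices n L" "Snk \<in> vertices n L" by (simp_all add: vertices_def)
    have h: "Pth b 0 (L b) \<in> paths n L" using b by simp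
    have 1: "mult n L (bv (Pth b 0 (L b))) (bv (Triv Snk)) = bv (Pth b 0 (L b))"
      using S h b by (subst mult_bv) (auto simp: vpos_def)
    have 2: "mult n L (bv (Triv Src)) (bv (Pth b 0 (L b))) = bv (Pth b 0 (L b))"
      using S h b by (subst mult_bv) (auto simp: vpos_def)
    show ?thesis using pe src snk 1 2 by simp
  qed
qed

lemma delta_eq:
  assumes a: "a < n" "L a = 1" and b: "b < n" "1 \<le> L b"
  shows "arrow_der n L a 0 (bv (Pth b 0 (L b))) x = scal (x (Pth a 0 1)) (bv (Pth b 0 (L b)))"
proof (rule ext)
  fix r
  have "arrow_der n L a 0 (bv (Pth b 0 (L b))) x r = (\<Sum>p\<in>paths n L. x p * arrow_contrib n L a 0 (bv (Pth b 0 (L b))) p r)"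
    by (simp add: arrow_der_def sum_fun_apply)
  also have "\<dots> = (\<Sum>p\<in>paths n L. if p = Pth a 0 1 then x (Pth a 0 1) * bv (Pth b 0 (L b)) r else 0)"
  proof (rule sum.cong)
    fix p assume p: "p \<in> paths n L"
    show "x p * arrow_contrib n L a 0 (bv (Pth b 0 (L b))) p r = (if p = Pth a 0 1 then x (Pth a 0 1) * bv (Pth b 0 (L b)) r else 0)"
      unfolding delta_contrib[OF a b p] by auto
  qed simp
  also have "\<dots> = scal (x (Pth a 0 1)) (bv (Pth b 0 (L b))) r"
    using a by (simp add: finite_paths)
  finally show "arrow_der n L a 0 (bv (Pth b 0 (L b))) x r = scal (x (Pth a 0 1)) (bv (Pth b 0 (L b))) r" .
qed

lemma inner_eq:
  assumes e: "in_E n L e"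
  shows "inner_der n L e x = Wd n L (\<lambda>r. e (Triv (psrc L r)) - e (Triv (ptgt L r))) x"
proof (rule ext)
  fix r
  have e0: "\<And>i j k. e (Pth i j k) = 0" using e by (simp add: in_E_def)
  show "inner_der n L e x r = Wd n L (\<lambda>r. e (Triv (psrc L r)) - e (Triv (ptgt L r))) x r"
  proof (cases "r \<in> paths n L")
    case False thus ?thesis by (simp add: inner_der_def Wd_def mult_notP)
  next
    case True
    show ?thesis
    proof (cases r)
      case (Triv v) thus ?thesis using True by (simp add: inner_der_def Wd_def mult_Triv)
    next
      case (Pth i j k) thus ?thesis using True by (simp add: inner_der_def Wd_def mult_Pth e0 algebra_simps)
    qed
  qed
qed

lemma span_eq:
  assumes M: "M \<subseteq> {..<n}" and L1: "\<forall>i<n. 1 \<le> L i" and e: "in_E n L e"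
  shows "(\<Sum>i\<in>M. scal (c i) (y_der n L i x)) + inner_der n L e x = Wd n L (wt L M c (\<lambda>v. e (Triv v))) x"
proof (rule ext)
  fix r
  have fM: "finite M" using M finite_subset by blast
  have "(\<Sum>i\<in>M. scal (c i) (y_der n L i x)) r = (\<Sum>i\<in>M. c i * Wd n L (\<lambda>r. if \<exists>k. r = Pth i 0 k then 1 else 0) x r)"
    by (simp add: sum_fun_apply) (rule sum.cong, use M L1 in \<open>auto simp: y_der_eq\<close>)
  also have "\<dots> = (if r \<in> paths n L then (\<Sum>i\<in>M. if (\<exists>k. r = Pth i 0 k) then c i else 0) * x r else 0)"
    by (auto simp: Wd_def sum_distrib_right intro!: sum.cong)
  finally show "((\<Sum>i\<in>M. scal (c i) (y_der n L i x)) + inner_der n L e x) r = Wd n L (wt L M c (\<lambda>v. e (Triv v))) x r"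
    by (simp add: inner_eq[OF e] Wd_def wt_def algebra_simps)
qed



lemma I_trans: "a - b \<in> gen_ideal n L G \<Longrightarrow> b - c \<in> gen_ideal n L G \<Longrightarrow> a - c \<in> gen_ideal n L G"
  using I_add[of "a - b" n L G "b - c"] by simp

lemma I_drop: "a - (b + c) \<in> gen_ideal n L G \<Longrightarrow> b \<in> gen_ideal n L G \<Longrightarrow> a - c \<in> gen_ideal n L G"
  using I_add[of "a - (b + c)" n L G b] by (simp add: algebra_simps)

lemma I_drop2: "a - (b + c) \<in> gen_ideal n L G \<Longrightarrow> c \<in> gen_ideal n L G \<Longrightarrow> a - b \<in> gen_ideal n L G"
  using I_add[of "a - (b + c)" n L G c] by (simp add: algebra_simps)

lemma I_minus_mem: "a - b \<in> gen_ideal n L G \<Longrightarrow> b \<in> gen_ideal n L G \<Longrightarrow> a \<in> gen_ideal n L G"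
  using I_add[of "a - b" n L G b] by simp

lemma psrc_in: "p \<in> paths n L \<Longrightarrow> psrc L p \<in> vertices n L"
  by (cases p) (auto intro: vpos_in_vertices)
lemma ptgt_in: "p \<in> paths n L \<Longrightarrow> ptgt L p \<in> vertices n L"
  by (cases p) (auto intro: vpos_in_vertices)

definition Rst :: "nat \<Rightarrow> (nat \<Rightarrow> nat) \<Rightarrow> vtx \<Rightarrow> vtx \<Rightarrow> (path \<Rightarrow> complex) \<Rightarrow> (path \<Rightarrow> complex)" where
  "Rst n L s t z = (\<lambda>r. if r \<in> paths n L \<and> psrc L r = s \<and> ptgt L r = t then z r else 0)"

lemma der_restrict:
  assumes d: "is_der n L (gen_ideal n L G) d" and p: "p \<in> paths n L"
  shows "d (bv p) - Rst n L (psrc L p) (ptgt L p) (d (bv p)) \<in> gen_ideal n L G"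
proof -
  let ?I = "gen_ideal n L G"
  define s where "s = psrc L p"
  define t where "t = ptgt L p"
  have sv: "s \<in> vertices n L" and tv: "t \<in> vertices n L" using p by (auto simp: s_def t_def psrc_in ptgt_in)
  have es: "bv (Triv s) \<in> CQ n L" "bv (Triv t) \<in> CQ n L" "bv p \<in> CQ n L" using sv tv p by (auto intro: CQ_bv)
  have m1: "mult n L (bv (Triv s)) (bv p) = bv p" using sv p by (subst mult_bv) (auto simp: s_def)
  have m2: "mult n L (bv p) (bv (Triv t)) = bv p" using tv p by (subst mult_bv) (auto simp: t_def, cases p, auto)
  have dI: "\<And>v. v \<in> vertices n L \<Longrightarrow> d (bv (Triv v)) \<in> ?I" using d by (simp add: is_der_def)
  have dCQ: "d (bv p) \<in> CQ n L" using d es by (simp add: is_der_def)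
  have L1: "d (mult n L (bv (Triv s)) (bv p)) - (mult n L (d (bv (Triv s))) (bv p) + mult n L (bv (Triv s)) (d (bv p))) \<in> ?I"
    using d es unfolding is_der_def by blast
  have A1: "d (bv p) - mult n L (bv (Triv s)) (d (bv p)) \<in> ?I"
    by (rule I_drop[OF L1[unfolded m1]], rule I_rmult[OF dI[OF sv] es(3)])
  have L2: "d (mult n L (bv p) (bv (Triv t))) - (mult n L (d (bv p)) (bv (Triv t)) + mult n L (bv p) (d (bv (Triv t)))) \<in> ?I"
    using d es unfolding is_der_def by blast
  have A2: "d (bv p) - mult n L (d (bv p)) (bv (Triv t)) \<in> ?I"
    by (rule I_drop2[OF L2[unfolded m2]], rule I_lmult[OF dI[OF tv] es(3)])
  have A3: "mult n L (bv (Triv s)) (d (bv p)) - mult n L (bv (Triv s)) (mult n L (d (bv p)) (bv (Triv t))) \<in> ?I"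
    using I_lmult[OF A2 es(1)] by (simp only: mult_diff_right)
  have A: "d (bv p) - mult n L (bv (Triv s)) (mult n L (d (bv p)) (bv (Triv t))) \<in> ?I"
    by (rule I_trans[OF A1 A3])
  have "mult n L (bv (Triv s)) (mult n L (d (bv p)) (bv (Triv t))) = Rst n L s t (d (bv p))"
    by (rule ext) (simp add: mult_vtx_left[OF sv] mult_vtx_right[OF tv] Rst_def)
  thus ?thesis using A by (simp add: s_def t_def)
qed

lemma paths_between_arrow:
  assumes j: "j < n" "2 \<le> L j" "m < L j" and r: "r \<in> paths n L" "psrc L r = vpos L j m" "ptgt L r = vpos L j (Suc m)"
  shows "r = Pth j m (Suc m)"
proof (cases r)
  case (Triv v) thus ?thesis using r j by (auto simp: vpos_def split: if_splits)
next
  case (Pth i' j' k')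
  thus ?thesis using r j by (auto simp: vpos_def split: if_splits)
qed

lemma paths_between_ends:
  assumes r: "r \<in> paths n L" "psrc L r = Src" "ptgt L r = Snk"
  shows "\<exists>k<n. r = Pth k 0 (L k)"
proof (cases r)
  case (Triv v) thus ?thesis using r by auto
next
  case (Pth i' j' k')
  thus ?thesis using r by (auto simp: vpos_def split: if_splits)
qed

lemma der_vanish:
  assumes add: "\<forall>x\<in>CQ n L. \<forall>y\<in>CQ n L. D (x + y) - (D x + D y) \<in> gen_ideal n L G"
    and sc: "\<forall>c. \<forall>x\<in>CQ n L. D (scal c x) - scal c (D x) \<in> gen_ideal n L G"
    and leib: "\<forall>x\<in>CQ n L. \<forall>y\<in>CQ n L. D (mult n L x y) - (mult n L (D x) y + mult n L x (D y)) \<in> gen_ideal n L G"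
    and vert: "\<forall>v\<in>vertices n L. D (bv (Triv v)) \<in> gen_ideal n L G"
    and arr: "\<forall>j<n. \<forall>m<L j. D (bv (Pth j m (Suc m))) \<in> gen_ideal n L G"
  shows "\<forall>x\<in>CQ n L. D x \<in> gen_ideal n L G"
proof -
  let ?I = "gen_ideal n L G"
  have pth: "Pth i j k \<in> paths n L \<Longrightarrow> D (bv (Pth i j k)) \<in> ?I" for i j k
  proof (induction k)
    case 0 thus ?case by simp
  next
    case (Suc k)
    show ?case
    proof (cases "k = j")
      case True thus ?thesis using Suc.prems arr by auto
    next
      case False
      hence jk: "j < k" using Suc.prems by auto
      have p1: "Pth i j k \<in> paths n L" and p2: "Pth i k (Suc k) \<in> paths n L" using Suc.prems jk by auto
      have eq: "bv (Pth i j (Suc k)) = mult n L (bv (Pth i j k)) (bv (Pth i k (Suc k)))"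
        using p1 p2 by (subst mult_bv) auto
      have IH: "D (bv (Pth i j k)) \<in> ?I" by (rule Suc.IH[OF p1])
      have a2: "D (bv (Pth i k (Suc k))) \<in> ?I" using arr p2 by auto
      have c1: "bv (Pth i j k) \<in> CQ n L" "bv (Pth i k (Suc k)) \<in> CQ n L" using p1 p2 by (auto intro: CQ_bv)
      have "D (mult n L (bv (Pth i j k)) (bv (Pth i k (Suc k)))) - (mult n L (D (bv (Pth i j k))) (bv (Pth i k (Suc k))) + mult n L (bv (Pth i j k)) (D (bv (Pth i k (Suc k))))) \<in> ?I"
        using leib c1 by blast
      moreover have "mult n L (D (bv (Pth i j k))) (bv (Pth i k (Suc k))) + mult n L (bv (Pth i j k)) (D (bv (Pth i k (Suc k)))) \<in> ?I"
        by (intro I_add I_rmult I_lmult IH a2 c1)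
      ultimately show ?thesis unfolding eq by (rule I_minus_mem)
    qed
  qed
  have bvp: "p \<in> paths n L \<Longrightarrow> D (bv p) \<in> ?I" for p
    using vert pth by (cases p) auto
  have z0: "scal 0 (0::path \<Rightarrow> complex) = 0" by (simp add: fun_eq_iff)
  have D0: "D 0 \<in> ?I"
  proof -
    have "D (scal 0 0) - scal 0 (D 0) \<in> ?I" using sc by simp
    moreover have "scal 0 (D 0) = 0" by (simp add: fun_eq_iff)
    ultimately show ?thesis unfolding z0 by simp
  qed
  show ?thesis
  proof
    fix x assume x: "x \<in> CQ n L"
    have "\<And>F. F \<subseteq> paths n L \<Longrightarrow> D (\<Sum>p\<in>F. scal (x p) (bv p)) \<in> ?I"
    proof -
      fix F assume F: "F \<subseteq> paths n L"
      hence "finite F" using finite_paths finite_subset by blast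
      thus "D (\<Sum>p\<in>F. scal (x p) (bv p)) \<in> ?I" using F
      proof (induction F rule: finite_induct)
        case empty show ?case by (simp only: sum.empty D0)
      next
        case (insert a F)
        have aP: "a \<in> paths n L" using insert by auto
        have c1: "scal (x a) (bv a) \<in> CQ n L" using aP by (intro CQ_scal CQ_bv)
        have c2: "(\<Sum>p\<in>F. scal (x p) (bv p)) \<in> CQ n L" using insert by (intro CQ_sum CQ_scal CQ_bv) auto
        have s1: "D (scal (x a) (bv a)) \<in> ?I"
        proof -
          have "D (scal (x a) (bv a)) - scal (x a) (D (bv a)) \<in> ?I" using sc aP CQ_bv by blast
          moreover have "scal (x a) (D (bv a)) \<in> ?I" using bvp[OF aP] by (rule I_scal)
          ultimately show ?thesis by (rule I_minus_mem)
        qed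
        have "D (scal (x a) (bv a) + (\<Sum>p\<in>F. scal (x p) (bv p))) - (D (scal (x a) (bv a)) + D (\<Sum>p\<in>F. scal (x p) (bv p))) \<in> ?I"
          using add c1 c2 by blast
        moreover have "D (scal (x a) (bv a)) + D (\<Sum>p\<in>F. scal (x p) (bv p)) \<in> ?I"
        proof -
          have IH': "D (\<Sum>p\<in>F. scal (x p) (bv p)) \<in> ?I" using insert.IH insert.prems by blast
          show ?thesis by (rule I_add[OF s1 IH'])
        qed
        ultimately have "D (scal (x a) (bv a) + (\<Sum>p\<in>F. scal (x p) (bv p))) \<in> ?I" by (rule I_minus_mem)
        moreover have "(\<Sum>p\<in>insert a F. scal (x p) (bv p)) = scal (x a) (bv a) + (\<Sum>p\<in>F. scal (x p) (bv p))"
          using insert.hyps by (rule sum.insert)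
        ultimately show ?case by metis
      qed
    qed
    hence "D (\<Sum>p\<in>paths n L. scal (x p) (bv p)) \<in> ?I" by blast
    thus "D x \<in> ?I" using CQ_expand[OF x] by simp
  qed
qed



declare scal_apply[simp del]

lemma mono_branch_in_I:
  assumes i: "i \<in> mono_branches n L (gen_ideal n L G)"
  shows "bv (branch L i) \<in> gen_ideal n L G"
proof -
  obtain j k where jk: "i < n" "j < k" "k \<le> L i" "bv (Pth i j k) \<in> gen_ideal n L G"
    using i unfolding mono_branches_def by blast
  have A: "bv (Pth i 0 k) \<in> gen_ideal n L G"
  proof (cases "j = 0")
    case True thus ?thesis using jk by simp
  next
    case False
    have "mult n L (bv (Pth i 0 j)) (bv (Pth i j k)) = bv (Pth i 0 k)"
      using jk False by (subst mult_bv) auto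
    moreover have "mult n L (bv (Pth i 0 j)) (bv (Pth i j k)) \<in> gen_ideal n L G"
      using jk False by (intro I_lmult CQ_bv) auto
    ultimately show ?thesis by simp
  qed
  show ?thesis
  proof (cases "k = L i")
    case True thus ?thesis using A by (simp add: branch_def)
  next
    case False
    have "mult n L (bv (Pth i 0 k)) (bv (Pth i k (L i))) = bv (Pth i 0 (L i))"
      using jk False by (subst mult_bv) auto
    moreover have "mult n L (bv (Pth i 0 k)) (bv (Pth i k (L i))) \<in> gen_ideal n L G"
      using jk False A by (intro I_rmult CQ_bv) auto
    ultimately show ?thesis by (simp add: branch_def)
  qed
qed

lemma omega_i_eq: "(\<lambda>r. if \<exists>k. r = Pth i 0 k then 1 else 0) = wt L {i} (\<lambda>_. 1) (\<lambda>_. 0)"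
  by (rule ext) (simp add: wt_def)

lemma y_is_der:
  assumes L1: "\<forall>i<n. 1 \<le> L i" and tg: "toupie_generators n L G" and i: "i < n"
    and br: "bv (branch L i) \<in> gen_ideal n L G \<or> L i = 1"
  shows "is_der n L (gen_ideal n L G) (y_der n L i)"
proof -
  have eq: "y_der n L i = Wd n L (wt L {i} (\<lambda>_. 1) (\<lambda>_. 0))"
    using y_der_eq[of i n L] i L1 omega_i_eq[of i L] by (auto simp: fun_eq_iff)
  have wc: "wcond n L G (wt L {i} (\<lambda>_. 1) (\<lambda>_. 0))"
    unfolding wcond_def
  proof (rule exI[of _ 0], intro allI impI)
    fix k assume k: "k < n"
    show "wt L {i} (\<lambda>_. 1) (\<lambda>_. 0) (branch L k) = 0 \<or> bv (branch L k) \<in> gen_ideal n L G \<or> L k = 1"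
      using br by (cases "k = i") (auto simp: branch_def wt_Pth)
  qed
  show ?thesis unfolding eq by (rule Wd_is_der[OF L1 tg wadd_wt wc])
qed

lemma mult_branch_left:
  assumes b: "b < n" "1 \<le> L b"
  shows "mult n L (bv (Pth b 0 (L b))) y = scal (y (Triv Snk)) (bv (Pth b 0 (L b)))"
proof (rule ext)
  fix r
  show "mult n L (bv (Pth b 0 (L b))) y r = scal (y (Triv Snk)) (bv (Pth b 0 (L b))) r"
  proof (cases "r \<in> paths n L")
    case False
    hence "r \<noteq> Pth b 0 (L b)" using b by auto
    thus ?thesis using False by (simp add: mult_notP bv_apply scal_apply)
  next
    case True
    show ?thesis
    proof (cases r)
      case (Triv v) thus ?thesis using True by (simp add: mult_Triv bv_apply scal_apply)
    next
      case (Pth i j k)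
      have ik: "k \<le> L i" using True Pth by auto
      have "(\<Sum>m\<in>{j<..<k}. bv (Pth b 0 (L b)) (Pth i j m) * y (Pth i m k)) = 0"
        using ik by (intro sum.neutral) (auto simp: bv_apply)
      thus ?thesis using True Pth b by (auto simp: mult_Pth bv_apply vpos_def scal_apply)
    qed
  qed
qed

lemma mult_branch_right:
  assumes b: "b < n" "1 \<le> L b"
  shows "mult n L y (bv (Pth b 0 (L b))) = scal (y (Triv Src)) (bv (Pth b 0 (L b)))"
proof (rule ext)
  fix r
  show "mult n L y (bv (Pth b 0 (L b))) r = scal (y (Triv Src)) (bv (Pth b 0 (L b))) r"
  proof (cases "r \<in> paths n L")
    case False
    hence "r \<noteq> Pth b 0 (L b)" using b by auto
    thus ?thesis using False by (simp add: mult_notP bv_apply scal_apply)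
  next
    case True
    show ?thesis
    proof (cases r)
      case (Triv v) thus ?thesis using True by (simp add: mult_Triv bv_apply scal_apply)
    next
      case (Pth i j k)
      have "(\<Sum>m\<in>{j<..<k}. y (Pth i j m) * bv (Pth b 0 (L b)) (Pth i m k)) = 0"
        by (intro sum.neutral) (auto simp: bv_apply)
      thus ?thesis using True Pth b by (auto simp: mult_Pth bv_apply vpos_def scal_apply)
    qed
  qed
qed

lemma I_zero_eq: "x = 0 \<Longrightarrow> x \<in> gen_ideal n L G" by simp

lemma delta_is_der:
  assumes L1: "\<forall>i<n. 1 \<le> L i" and tg: "toupie_generators n L G" and a: "a < n" "L a = 1" and b: "b < n"
  shows "is_der n L (gen_ideal n L G) (arrow_der n L a 0 (bv (Pth b 0 (L b))))"
proof -
  let ?h = "bv (Pth b 0 (L b))"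
  have b1: "1 \<le> L b" using L1 b by auto
  have eq: "arrow_der n L a 0 ?h = (\<lambda>x. scal (x (Pth a 0 1)) ?h)"
    using delta_eq[where a=a and b=b and n=n and L=L] a b b1 by (auto simp: fun_eq_iff)
  have hCQ: "?h \<in> CQ n L" using b b1 by (intro CQ_bv) auto
  have va: "vpos L a 0 = Src" "vpos L a 1 = Snk" using a by (auto simp: vpos_def)
  have ma: "mult n L x y (Pth a 0 (Suc 0)) = x (Triv Src) * y (Pth a 0 (Suc 0)) + x (Pth a 0 (Suc 0)) * y (Triv Snk)" for x y
    using a by (simp add: mult_Pth va[simplified])
  show ?thesis unfolding eq is_der_def
  proof (intro conjI ballI allI impI)
    fix x y assume xy: "x \<in> CQ n L" "y \<in> CQ n L" "x - y \<in> gen_ideal n L G"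
    have "(x - y) (Pth a 0 (Suc 0)) = 0" using I_props[OF L1 tg xy(3)] by blast
    hence "scal (x (Pth a 0 1)) ?h - scal (y (Pth a 0 1)) ?h = 0" by (auto simp: fun_eq_iff scal_apply)
    thus "scal (x (Pth a 0 1)) ?h - scal (y (Pth a 0 1)) ?h \<in> gen_ideal n L G" by (rule I_zero_eq)
  next
    fix x y
    have "scal ((x + y) (Pth a 0 1)) ?h - (scal (x (Pth a 0 1)) ?h + scal (y (Pth a 0 1)) ?h) = 0"
      by (rule ext) (simp add: scal_apply algebra_simps)
    thus "scal ((x + y) (Pth a 0 1)) ?h - (scal (x (Pth a 0 1)) ?h + scal (y (Pth a 0 1)) ?h) \<in> gen_ideal n L G"
      by (rule I_zero_eq)
  next
    fix c x
    have "scal (scal c x (Pth a 0 1)) ?h - scal c (scal (x (Pth a 0 1)) ?h) = 0"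
      by (rule ext) (simp add: scal_apply algebra_simps)
    thus "scal (scal c x (Pth a 0 1)) ?h - scal c (scal (x (Pth a 0 1)) ?h) \<in> gen_ideal n L G"
      by (rule I_zero_eq)
  next
    fix x y
    have "scal (mult n L x y (Pth a 0 1)) ?h - (mult n L (scal (x (Pth a 0 1)) ?h) y + mult n L x (scal (y (Pth a 0 1)) ?h)) = 0"
      unfolding mult_scal_left mult_scal_right mult_branch_left[where b=b and n=n and L=L, OF b b1] mult_branch_right[where b=b and n=n and L=L, OF b b1]
      by (rule ext) (simp add: ma scal_apply algebra_simps)
    thus "scal (mult n L x y (Pth a 0 1)) ?h - (mult n L (scal (x (Pth a 0 1)) ?h) y + mult n L x (scal (y (Pth a 0 1)) ?h)) \<in> gen_ideal n L G"
      by (rule I_zero_eq)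
  next
    fix v
    have "scal (bv (Triv v) (Pth a 0 1)) ?h = 0" by (auto simp: fun_eq_iff bv_apply scal_apply)
    thus "scal (bv (Triv v) (Pth a 0 1)) ?h \<in> gen_ideal n L G" by (rule I_zero_eq)
  qed (simp add: CQ_scal hCQ)
qed

lemma arrow_F1:
  assumes d: "is_der n L (gen_ideal n L G) d" and j: "j < n" "2 \<le> L j" "m < L j"
  shows "d (bv (Pth j m (Suc m))) - scal (d (bv (Pth j m (Suc m))) (Pth j m (Suc m))) (bv (Pth j m (Suc m))) \<in> gen_ideal n L G"
proof -
  let ?g = "Pth j m (Suc m)"
  have g: "?g \<in> paths n L" using j by auto
  have R: "Rst n L (psrc L ?g) (ptgt L ?g) (d (bv ?g)) = scal (d (bv ?g) ?g) (bv ?g)"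
  proof (rule ext)
    fix r
    show "Rst n L (psrc L ?g) (ptgt L ?g) (d (bv ?g)) r = scal (d (bv ?g) ?g) (bv ?g) r"
    proof (cases "r \<in> paths n L \<and> psrc L r = psrc L ?g \<and> ptgt L r = ptgt L ?g")
      case True
      have "r = ?g" by (rule paths_between_arrow[where j=j and n=n and L=L and m=m and r=r]) (use j True in auto)
      thus ?thesis using j by (simp add: Rst_def bv_apply scal_apply g)
    next
      case False
      hence "r \<noteq> ?g" using g by blast
      thus ?thesis using False unfolding Rst_def by (auto simp: bv_apply scal_apply)
    qed
  qed
  show ?thesis using der_restrict[OF d g] unfolding R .
qed

lemma I_sum3: "X - (A + B) \<in> gen_ideal n L G \<Longrightarrow> A - A' \<in> gen_ideal n L G \<Longrightarrow> B - B' \<in> gen_ideal n L G \<Longrightarrow> X - (A' + B') \<in> gen_ideal n L G"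
proof -
  assume h: "X - (A + B) \<in> gen_ideal n L G" "A - A' \<in> gen_ideal n L G" "B - B' \<in> gen_ideal n L G"
  have h1: "X - (A + B) + (A - A') + (B - B') \<in> gen_ideal n L G" using h by (intro I_add)
  have h2: "X - (A + B) + (A - A') + (B - B') = X - (A' + B')" by (simp add: algebra_simps)
  show ?thesis using h1 unfolding h2 .
qed

lemma branch_leib:
  assumes d: "is_der n L (gen_ideal n L G) d" and k: "k < n" "2 \<le> L k"
  shows "1 \<le> m \<Longrightarrow> m \<le> L k \<Longrightarrow> d (bv (Pth k 0 m)) - scal (\<Sum>m'<m. d (bv (Pth k m' (Suc m'))) (Pth k m' (Suc m'))) (bv (Pth k 0 m)) \<in> gen_ideal n L G"
proof (induction m)
  case 0 thus ?case by simp
next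
  case (Suc m)
  let ?l = "\<lambda>m'. d (bv (Pth k m' (Suc m'))) (Pth k m' (Suc m'))"
  show ?case
  proof (cases "m = 0")
    case True
    have s: "(\<Sum>m'<Suc 0. ?l m') = ?l 0" by simp
    show ?thesis unfolding True s by (rule arrow_F1[OF d k(1) k(2)]) (use k in simp)
  next
    case False
    let ?p = "Pth k 0 m" and ?g = "Pth k m (Suc m)"
    have ps: "?p \<in> paths n L" "?g \<in> paths n L" using Suc.prems False k by auto
    have cq: "bv ?p \<in> CQ n L" "bv ?g \<in> CQ n L" using ps by (auto intro: CQ_bv)
    have eq: "mult n L (bv ?p) (bv ?g) = bv (Pth k 0 (Suc m))" using ps by (subst mult_bv) auto
    have IH: "d (bv ?p) - scal (\<Sum>m'<m. ?l m') (bv ?p) \<in> gen_ideal n L G" by (rule Suc.IH) (use Suc.prems False in auto)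
    have F: "d (bv ?g) - scal (?l m) (bv ?g) \<in> gen_ideal n L G" using arrow_F1[OF d k(1) k(2), of m] Suc.prems by auto
    have Le: "d (mult n L (bv ?p) (bv ?g)) - (mult n L (d (bv ?p)) (bv ?g) + mult n L (bv ?p) (d (bv ?g))) \<in> gen_ideal n L G"
      using d cq unfolding is_der_def by blast
    have A: "mult n L (d (bv ?p)) (bv ?g) - scal (\<Sum>m'<m. ?l m') (bv (Pth k 0 (Suc m))) \<in> gen_ideal n L G"
      using I_rmult[OF IH cq(2)] by (simp only: mult_diff_left mult_scal_left eq)
    have B: "mult n L (bv ?p) (d (bv ?g)) - scal (?l m) (bv (Pth k 0 (Suc m))) \<in> gen_ideal n L G"
      using I_lmult[OF F cq(1)] by (simp only: mult_diff_right mult_scal_right eq)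
    have h1: "d (bv (Pth k 0 (Suc m))) - (scal (\<Sum>m'<m. ?l m') (bv (Pth k 0 (Suc m))) + scal (?l m) (bv (Pth k 0 (Suc m)))) \<in> gen_ideal n L G"
      using I_sum3[OF Le[unfolded eq] A B] .
    have h2: "scal (\<Sum>m'<m. ?l m') (bv (Pth k 0 (Suc m))) + scal (?l m) (bv (Pth k 0 (Suc m))) = scal (\<Sum>m'<Suc m. ?l m') (bv (Pth k 0 (Suc m)))"
      by (rule ext) (simp add: scal_apply algebra_simps)
    show ?thesis using h1 unfolding h2 .
  qed
qed



declare scal_apply[simp del]

lemma wcond_wt:
  assumes L1: "\<forall>i<n. 1 \<le> L i" and Mb: "\<forall>k\<in>M. bv (branch L k) \<in> gen_ideal n L G" and fM: "finite M"
  shows "wcond n L G (wt L M c pot)"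
  unfolding wcond_def
proof (rule exI[of _ "pot Src - pot Snk"], intro allI impI)
  fix k assume k: "k < n"
  show "wt L M c pot (branch L k) = pot Src - pot Snk \<or> bv (branch L k) \<in> gen_ideal n L G \<or> L k = 1"
    using Mb L1 k fM by (cases "k \<in> M") (auto simp: branch_def wt_Pth vpos_def)
qed

lemma d_zero: "is_der n L (gen_ideal n L G) d \<Longrightarrow> d 0 \<in> gen_ideal n L G"
proof -
  assume d: "is_der n L (gen_ideal n L G) d"
  have "d (scal 0 0) - scal 0 (d 0) \<in> gen_ideal n L G" using d unfolding is_der_def by (metis CQ_zero)
  moreover have "scal 0 (0::path\<Rightarrow>complex) = 0" "scal 0 (d 0) = 0" by (auto simp: fun_eq_iff scal_apply)
  ultimately show ?thesis by simp
qed

lemma comm_W: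
  assumes L1: "\<forall>i<n. 1 \<le> L i" and tg: "toupie_generators n L G"
    and d': "is_der n L (gen_ideal n L G) d'" and M: "M \<subseteq> {..<n}"
    and Mb: "\<forall>k\<in>M. bv (branch L k) \<in> gen_ideal n L G"
  shows "\<forall>x\<in>CQ n L. Wd n L (wt L M c pot) (d' x) - d' (Wd n L (wt L M c pot) x) \<in> gen_ideal n L G"
proof -
  let ?I = "gen_ideal n L G"
  let ?w = "wt L M c pot"
  let ?W = "Wd n L ?w"
  define C where "C = (\<lambda>x. ?W (d' x) - d' (?W x))"
  have fM: "finite M" using M finite_subset by blast
  have wc: "wcond n L G ?w" by (rule wcond_wt[OF L1 Mb fM])
  have pres: "\<And>x. x \<in> ?I \<Longrightarrow> ?W x \<in> ?I" by (rule Wd_pres[OF L1 tg wadd_wt wc])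
  have dcq: "\<And>x. x \<in> CQ n L \<Longrightarrow> d' x \<in> CQ n L" using d' by (simp add: is_der_def)
  have dcong: "\<And>x y. x \<in> CQ n L \<Longrightarrow> y \<in> CQ n L \<Longrightarrow> x - y \<in> ?I \<Longrightarrow> d' x - d' y \<in> ?I" using d' by (simp add: is_der_def)
  have dadd: "\<And>x y. x \<in> CQ n L \<Longrightarrow> y \<in> CQ n L \<Longrightarrow> d' (x + y) - (d' x + d' y) \<in> ?I" using d' by (simp add: is_der_def)
  have dscal: "\<And>c x. x \<in> CQ n L \<Longrightarrow> d' (scal c x) - scal c (d' x) \<in> ?I" using d' by (simp add: is_der_def)
  have dleib: "\<And>x y. x \<in> CQ n L \<Longrightarrow> y \<in> CQ n L \<Longrightarrow> d' (mult n L x y) - (mult n L (d' x) y + mult n L x (d' y)) \<in> ?I"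
    using d' by (simp add: is_der_def)
  have dvert: "\<And>v. v \<in> vertices n L \<Longrightarrow> d' (bv (Triv v)) \<in> ?I" using d' by (simp add: is_der_def)
  have WCQ: "\<And>x. ?W x \<in> CQ n L" by (rule Wd_CQ)
  have "\<forall>x\<in>CQ n L. C x \<in> ?I"
  proof (rule der_vanish)
    show "\<forall>x\<in>CQ n L. \<forall>y\<in>CQ n L. C (x + y) - (C x + C y) \<in> ?I"
    proof (intro ballI)
      fix x y assume xy: "x \<in> CQ n L" "y \<in> CQ n L"
      have e1: "?W (d' (x + y) - (d' x + d' y)) \<in> ?I" by (rule pres[OF dadd[OF xy]])
      have e2: "d' (?W x + ?W y) - (d' (?W x) + d' (?W y)) \<in> ?I" by (rule dadd[OF WCQ WCQ])
      have eqn: "C (x + y) - (C x + C y) = ?W (d' (x + y) - (d' x + d' y)) - (d' (?W x + ?W y) - (d' (?W x) + d' (?W y)))"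
        unfolding C_def Wd_add Wd_diff by (rule ext) (simp add: algebra_simps)
      show "C (x + y) - (C x + C y) \<in> ?I" unfolding eqn by (rule I_diff[OF e1 e2])
    qed
  next
    show "\<forall>c. \<forall>x\<in>CQ n L. C (scal c x) - scal c (C x) \<in> ?I"
    proof (intro allI ballI)
      fix c x assume x: "x \<in> CQ n L"
      have e1: "?W (d' (scal c x) - scal c (d' x)) \<in> ?I" by (rule pres[OF dscal[OF x]])
      have e2: "d' (scal c (?W x)) - scal c (d' (?W x)) \<in> ?I" by (rule dscal[OF WCQ])
      have eqn: "C (scal c x) - scal c (C x) = ?W (d' (scal c x) - scal c (d' x)) - (d' (scal c (?W x)) - scal c (d' (?W x)))"
        unfolding C_def Wd_scal Wd_diff by (rule ext) (simp add: scal_apply algebra_simps)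
      show "C (scal c x) - scal c (C x) \<in> ?I" unfolding eqn by (rule I_diff[OF e1 e2])
    qed
  next
    show "\<forall>x\<in>CQ n L. \<forall>y\<in>CQ n L. C (mult n L x y) - (mult n L (C x) y + mult n L x (C y)) \<in> ?I"
    proof (intro ballI)
      fix x y assume xy: "x \<in> CQ n L" "y \<in> CQ n L"
      define E1 where "E1 = ?W (d' (mult n L x y) - (mult n L (d' x) y + mult n L x (d' y)))"
      define E2 where "E2 = d' (mult n L (?W x) y + mult n L x (?W y)) - (d' (mult n L (?W x) y) + d' (mult n L x (?W y)))"
      define E3 where "E3 = d' (mult n L (?W x) y) - (mult n L (d' (?W x)) y + mult n L (?W x) (d' y))"
      define E4 where "E4 = d' (mult n L x (?W y)) - (mult n L (d' x) (?W y) + mult n L x (d' (?W y)))"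
      have e1: "E1 \<in> ?I" unfolding E1_def by (rule pres[OF dleib[OF xy]])
      have e2: "E2 \<in> ?I" unfolding E2_def by (rule dadd) (simp_all add: mult_in_CQ)
      have e3: "E3 \<in> ?I" unfolding E3_def by (rule dleib[OF WCQ xy(2)])
      have e4: "E4 \<in> ?I" unfolding E4_def by (rule dleib[OF xy(1) WCQ])
      have eqn: "C (mult n L x y) - (mult n L (C x) y + mult n L x (C y)) = E1 - E2 - E3 - E4"
        unfolding C_def E1_def E2_def E3_def E4_def Wd_diff Wd_add Wd_Leibniz[OF wadd_wt] mult_diff_left mult_diff_right
        by (rule ext) (simp add: algebra_simps)
      show "C (mult n L x y) - (mult n L (C x) y + mult n L x (C y)) \<in> ?I"
        unfolding eqn by (intro I_diff e1 e2 e3 e4)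
    qed
  next
    show "\<forall>v\<in>vertices n L. C (bv (Triv v)) \<in> ?I"
    proof
      fix v assume v: "v \<in> vertices n L"
      have "?W (bv (Triv v)) = 0" using v by (simp add: Wd_bv wt_Triv fun_eq_iff scal_apply)
      hence eqn: "C (bv (Triv v)) = ?W (d' (bv (Triv v))) - d' 0" unfolding C_def by simp
      show "C (bv (Triv v)) \<in> ?I" unfolding eqn by (rule I_diff[OF pres[OF dvert[OF v]] d_zero[OF d']])
    qed
  next
    show "\<forall>j<n. \<forall>m<L j. C (bv (Pth j m (Suc m))) \<in> ?I"
    proof (intro allI impI)
      fix j m assume j: "j < n" and m: "m < L j"
      let ?g = "Pth j m (Suc m)"
      have g: "?g \<in> paths n L" using j m by auto
      have gcq: "bv ?g \<in> CQ n L" using g by (rule CQ_bv)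
      define z where "z = d' (bv ?g)"
      define w where "w = Rst n L (psrc L ?g) (ptgt L ?g) z"
      have zcq: "z \<in> CQ n L" unfolding z_def by (rule dcq[OF gcq])
      have zw: "z - w \<in> ?I" unfolding z_def w_def by (rule der_restrict[OF d' g])
      have wW: "?W (bv ?g) = scal (?w ?g) (bv ?g)" by (rule Wd_bv[OF g])
      have key: "?W w - scal (?w ?g) w \<in> ?I"
      proof -
        have pt: "?W w - scal (?w ?g) w = (\<lambda>r. if r \<in> paths n L \<and> psrc L r = psrc L ?g \<and> ptgt L r = ptgt L ?g then (?w r - ?w ?g) * z r else 0)"
          by (rule ext) (auto simp: w_def Rst_def Wd_def scal_apply algebra_simps)
        show ?thesis
        proof (cases "L j = 1")
          case False
          hence j2: "2 \<le> L j" using L1 j by (metis One_nat_def Suc_1 Suc_leI le_neq_implies_less)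
          have "?W w - scal (?w ?g) w = 0"
            unfolding pt using paths_between_arrow[where j=j and n=n and L=L and m=m] j2 j m
            by (auto simp: fun_eq_iff)
          thus ?thesis by (rule I_zero_eq)
        next
          case True
          hence m0: "m = 0" using m by simp
          have jM: "j \<notin> M"
          proof
            assume "j \<in> M"
            hence "bv (branch L j) \<in> ?I" using Mb by blast
            hence "bv (branch L j) (Pth j 0 (Suc 0)) = 0" using I_props[OF L1 tg] by blast
            thus False using True by (simp add: branch_def bv_apply)
          qed
          have se: "psrc L ?g = Src" "ptgt L ?g = Snk" using True m0 by (auto simp: vpos_def)
          have "?W w - scal (?w ?g) w = (\<Sum>k\<in>M. scal (c k * z (branch L k)) (bv (branch L k)))"
          proof (rule ext)
            fix r
            show "(?W w - scal (?w ?g) w) r = (\<Sum>k\<in>M. scal (c k * z (branch L k)) (bv (branch L k))) r"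
            proof (cases "r \<in> paths n L \<and> psrc L r = Src \<and> ptgt L r = Snk")
              case True
              then obtain k where k: "k < n" "r = Pth k 0 (L k)" using paths_between_ends by blast
              have "(\<Sum>k'\<in>M. scal (c k' * z (branch L k')) (bv (branch L k'))) r = (\<Sum>k'\<in>M. if k' = k then c k * z r else 0)"
                unfolding sum_fun_apply by (rule sum.cong) (auto simp: scal_apply bv_apply branch_def k)
              also have "\<dots> = (if k \<in> M then c k * z r else 0)" using fM by simp
              finally show ?thesis unfolding pt using True k se fM jM m0 L1
                by (auto simp: wt_Pth vpos_def)
            next
              case False
              have "(\<Sum>k'\<in>M. scal (c k' * z (branch L k')) (bv (branch L k'))) r = 0"
                unfolding sum_fun_apply
              proof (rule sum.neutral, rule ballI)
                fix k' assume "k' \<in> M"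
                hence "k' < n" using M by auto
                hence "r \<noteq> branch L k'" using False L1 by (auto simp: branch_def vpos_def)
                thus "scal (c k' * z (branch L k')) (bv (branch L k')) r = 0" by (simp add: scal_apply bv_apply)
              qed
              thus ?thesis unfolding pt using False se by auto
            qed
          qed
          moreover have "(\<Sum>k\<in>M. scal (c k * z (branch L k)) (bv (branch L k))) \<in> ?I"
            using Mb by (intro I_sum I_scal) auto
          ultimately show ?thesis by (simp only:)
        qed
      qed
      have a1: "?W z - ?W w \<in> ?I" using pres[OF zw] by (simp only: Wd_diff)
      have a2: "d' (scal (?w ?g) (bv ?g)) - scal (?w ?g) z \<in> ?I" unfolding z_def by (rule dscal[OF gcq])
      have a3: "scal (?w ?g) (z - w) \<in> ?I" by (rule I_scal[OF zw])
      have eqn: "C (bv ?g) = (?W z - ?W w) + (?W w - scal (?w ?g) w) - (d' (scal (?w ?g) (bv ?g)) - scal (?w ?g) z) - scal (?w ?g) (z - w)"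
        unfolding C_def wW z_def by (rule ext) (simp add: scal_apply algebra_simps)
      show "C (bv ?g) \<in> ?I" unfolding eqn by (intro I_diff I_add a1 key a2 a3)
    qed
  qed
  thus ?thesis by (simp add: C_def)
qed



lemma I_eval: "\<forall>i<n. 1 \<le> L i \<Longrightarrow> toupie_generators n L G \<Longrightarrow> x \<in> gen_ideal n L G \<Longrightarrow> x (Pth i j (Suc j)) = 0"
  using I_props by blast

lemma inner_bv:
  assumes e: "in_E n L e" and p: "p \<in> paths n L"
  shows "inner_der n L e (bv p) = scal (e (Triv (psrc L p)) - e (Triv (ptgt L p))) (bv p)"
  unfolding inner_eq[OF e] Wd_bv[OF p] ..

lemma central_C1:
  assumes L1: "\<forall>i<n. 1 \<le> L i" and tg: "toupie_generators n L G"
    and d: "is_der n L (gen_ideal n L G) d" and cen: "hh1_central n L (gen_ideal n L G) d"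
    and j: "j < n" "L j = 1"
  shows "d (bv (Pth j 0 (Suc 0))) - scal (d (bv (Pth j 0 (Suc 0))) (Pth j 0 (Suc 0))) (bv (Pth j 0 (Suc 0))) \<in> gen_ideal n L G"
proof -
  let ?g = "Pth j 0 (Suc 0)"
  let ?I = "gen_ideal n L G"
  let ?l = "d (bv ?g) ?g"
  have g: "?g \<in> paths n L" using j by auto
  have jj: "1 \<le> L j" using j by simp
  have yeq: "\<And>x. y_der n L j x = Wd n L (\<lambda>r. if \<exists>k. r = Pth j 0 k then 1 else 0) x"
    using y_der_eq[where i=j and n=n and L=L] j(1) jj by blast
  have yd: "is_der n L ?I (y_der n L j)" using y_is_der[OF L1 tg j(1)] j by simp
  obtain e' where e': "in_E n L e'" and h: "\<forall>x\<in>CQ n L. d (y_der n L j x) - y_der n L j (d x) - inner_der n L e' x \<in> ?I"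
    using cen yd unfolding hh1_central_def by auto
  have gcq: "bv ?g \<in> CQ n L" using g by (rule CQ_bv)
  define \<nu> where "\<nu> = e' (Triv (psrc L ?g)) - e' (Triv (ptgt L ?g))"
  have y1: "y_der n L j (bv ?g) = bv ?g"
    unfolding yeq using j g by (auto simp: Wd_bv scal_apply fun_eq_iff bv_apply)
  have y2: "y_der n L j (d (bv ?g)) = scal ?l (bv ?g)"
  proof (rule ext)
    fix r
    show "y_der n L j (d (bv ?g)) r = scal ?l (bv ?g) r"
      unfolding yeq using j by (auto simp: Wd_def scal_apply bv_apply)
  qed
  have X: "d (bv ?g) - scal ?l (bv ?g) - scal \<nu> (bv ?g) \<in> ?I"
  proof -
    have h0: "d (y_der n L j (bv ?g)) - y_der n L j (d (bv ?g)) - inner_der n L e' (bv ?g) \<in> ?I" using h gcq by blast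
    show ?thesis using h0 unfolding y1 y2 inner_bv[OF e' g] \<nu>_def .
  qed
  have "(d (bv ?g) - scal ?l (bv ?g) - scal \<nu> (bv ?g)) ?g = 0" by (rule I_eval[OF L1 tg X])
  hence "\<nu> = 0" by (simp add: scal_apply bv_apply)
  hence "d (bv ?g) - scal ?l (bv ?g) - scal \<nu> (bv ?g) = d (bv ?g) - scal ?l (bv ?g)"
    by (simp add: fun_eq_iff scal_apply)
  thus ?thesis using X by simp
qed

lemma central_C2:
  assumes L1: "\<forall>i<n. 1 \<le> L i" and tg: "toupie_generators n L G"
    and d: "is_der n L (gen_ideal n L G) d" and cen: "hh1_central n L (gen_ideal n L G) d"
    and j: "j < n" "L j = 1" and a0: "a0 < n" "L a0 = 1"
  shows "d (bv (Pth j 0 (Suc 0))) (Pth j 0 (Suc 0)) = d (bv (Pth a0 0 (Suc 0))) (Pth a0 0 (Suc 0))"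
proof (cases "j = a0")
  case True thus ?thesis by simp
next
  case False
  let ?g = "Pth j 0 (Suc 0)" and ?h = "Pth a0 0 (Suc 0)"
  let ?I = "gen_ideal n L G"
  have hh: "Pth a0 0 (L a0) = ?h" using a0 by simp
  have g: "?g \<in> paths n L" using j by auto
  have gcq: "bv ?g \<in> CQ n L" using g by (rule CQ_bv)
  have dd: "is_der n L ?I (arrow_der n L j 0 (bv ?h))"
    using delta_is_der[where a=j and b=a0 and n=n and L=L and G=G] L1 tg j a0 hh by simp
  have deq: "\<And>x. arrow_der n L j 0 (bv ?h) x = scal (x ?g) (bv ?h)"
    using delta_eq[where a=j and b=a0 and n=n and L=L] j a0 hh by simp
  obtain e' where e': "in_E n L e'" and h: "\<forall>x\<in>CQ n L. d (arrow_der n L j 0 (bv ?h) x) - arrow_der n L j 0 (bv ?h) (d x) - inner_der n L e' x \<in> ?I"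
    using cen dd unfolding hh1_central_def by blast
  define \<nu> where "\<nu> = e' (Triv (psrc L ?g)) - e' (Triv (ptgt L ?g))"
  have y1: "arrow_der n L j 0 (bv ?h) (bv ?g) = bv ?h" unfolding deq by (simp add: fun_eq_iff scal_apply bv_apply)
  have y2: "arrow_der n L j 0 (bv ?h) (d (bv ?g)) = scal (d (bv ?g) ?g) (bv ?h)" unfolding deq ..
  have X: "d (bv ?h) - scal (d (bv ?g) ?g) (bv ?h) - scal \<nu> (bv ?g) \<in> ?I"
  proof -
    have h0: "d (arrow_der n L j 0 (bv ?h) (bv ?g)) - arrow_der n L j 0 (bv ?h) (d (bv ?g)) - inner_der n L e' (bv ?g) \<in> ?I" using h gcq by blast
    show ?thesis using h0 unfolding y1 y2 inner_bv[OF e' g] \<nu>_def .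
  qed
  have "(d (bv ?h) - scal (d (bv ?g) ?g) (bv ?h) - scal \<nu> (bv ?g)) ?h = 0" by (rule I_eval[OF L1 tg X])
  thus ?thesis using False by (simp add: scal_apply bv_apply)
qed

lemma central_C3:
  assumes L1: "\<forall>i<n. 1 \<le> L i" and tg: "toupie_generators n L G"
    and d: "is_der n L (gen_ideal n L G) d" and cen: "hh1_central n L (gen_ideal n L G) d"
    and k: "k < n" "2 \<le> L k" "k \<notin> mono_branches n L (gen_ideal n L G)" and a0: "a0 < n" "L a0 = 1"
  shows "(\<Sum>m<L k. d (bv (Pth k m (Suc m))) (Pth k m (Suc m))) = d (bv (Pth a0 0 (Suc 0))) (Pth a0 0 (Suc 0))"
proof -
  let ?g = "Pth a0 0 (Suc 0)" and ?b = "Pth k 0 (L k)"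
  let ?I = "gen_ideal n L G"
  let ?S = "\<Sum>m<L k. d (bv (Pth k m (Suc m))) (Pth k m (Suc m))"
  let ?La = "d (bv ?g) ?g"
  have g: "?g \<in> paths n L" using a0 by auto
  have gcq: "bv ?g \<in> CQ n L" using g by (rule CQ_bv)
  have dd: "is_der n L ?I (arrow_der n L a0 0 (bv ?b))"
    using delta_is_der[where a=a0 and b=k and n=n and L=L and G=G] L1 tg k a0 by simp
  have deq: "\<And>x. arrow_der n L a0 0 (bv ?b) x = scal (x ?g) (bv ?b)"
    using delta_eq[where a=a0 and b=k and n=n and L=L] k a0 by simp
  obtain e' where e': "in_E n L e'" and h: "\<forall>x\<in>CQ n L. d (arrow_der n L a0 0 (bv ?b) x) - arrow_der n L a0 0 (bv ?b) (d x) - inner_der n L e' x \<in> ?I"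
    using cen dd unfolding hh1_central_def by blast
  define \<nu> where "\<nu> = e' (Triv (psrc L ?g)) - e' (Triv (ptgt L ?g))"
  have y1: "arrow_der n L a0 0 (bv ?b) (bv ?g) = bv ?b" unfolding deq by (simp add: fun_eq_iff scal_apply bv_apply)
  have y2: "arrow_der n L a0 0 (bv ?b) (d (bv ?g)) = scal ?La (bv ?b)" unfolding deq ..
  have X: "d (bv ?b) - scal ?La (bv ?b) - scal \<nu> (bv ?g) \<in> ?I"
  proof -
    have h0: "d (arrow_der n L a0 0 (bv ?b) (bv ?g)) - arrow_der n L a0 0 (bv ?b) (d (bv ?g)) - inner_der n L e' (bv ?g) \<in> ?I" using h gcq by blast
    show ?thesis using h0 unfolding y1 y2 inner_bv[OF e' g] \<nu>_def .
  qed
  have Y: "d (bv ?b) - scal ?S (bv ?b) \<in> ?I"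
    using branch_leib[OF d k(1) k(2), of "L k"] k by simp
  have Z: "(d (bv ?b) - scal ?La (bv ?b) - scal \<nu> (bv ?g)) - (d (bv ?b) - scal ?S (bv ?b)) \<in> ?I"
    by (rule I_diff[OF X Y])
  have Zeq: "(d (bv ?b) - scal ?La (bv ?b) - scal \<nu> (bv ?g)) - (d (bv ?b) - scal ?S (bv ?b)) = scal (?S - ?La) (bv ?b) - scal \<nu> (bv ?g)"
    by (rule ext) (simp add: scal_apply algebra_simps)
  have Z2: "scal (?S - ?La) (bv ?b) - scal \<nu> (bv ?g) \<in> ?I" using Z unfolding Zeq .
  have "(scal (?S - ?La) (bv ?b) - scal \<nu> (bv ?g)) ?g = 0" by (rule I_eval[OF L1 tg Z2])
  moreover have "?b \<noteq> ?g" using k by auto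
  ultimately have nu0: "\<nu> = 0" by (auto simp: scal_apply bv_apply)
  have "scal (?S - ?La) (bv ?b) - scal \<nu> (bv ?g) = scal (?S - ?La) (bv ?b)"
    by (rule ext) (simp add: scal_apply nu0)
  hence Z3: "scal (?S - ?La) (bv ?b) \<in> ?I" using Z2 by simp
  show ?thesis
  proof (rule ccontr)
    assume ne: "?S \<noteq> ?La"
    have "scal (1 / (?S - ?La)) (scal (?S - ?La) (bv ?b)) \<in> ?I" by (rule I_scal[OF Z3])
    moreover have "scal (1 / (?S - ?La)) (scal (?S - ?La) (bv ?b)) = bv ?b"
      using ne by (simp add: fun_eq_iff scal_apply)
    ultimately have "bv ?b \<in> ?I" by simp
    moreover have "0 < L k" "L k \<le> L k" using k by auto
    ultimately have "k \<in> mono_branches n L ?I" unfolding mono_branches_def using k(1) by blast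
    thus False using k by simp
  qed
qed



theorem proposition6p2:
  fixes n :: nat and L :: "nat \<Rightarrow> nat" and G :: "(path \<Rightarrow> complex) set"
  assumes "\<forall>i<n. 1 \<le> L i"
    and "toupie_generators n L G"
    and "num_a n L > 0"
  shows "(\<forall>i\<in>mono_branches n L (gen_ideal n L G). is_der n L (gen_ideal n L G) (y_der n L i))
       \<and> (\<forall>d. is_der n L (gen_ideal n L G) d \<longrightarrow>
            (hh1_central n L (gen_ideal n L G) d
             \<longleftrightarrow> in_span_y n L (gen_ideal n L G) (mono_branches n L (gen_ideal n L G)) d))"
proof -
  note L1 = assms(1) and tg = assms(2)
  let ?I = "gen_ideal n L G"
  let ?M = "mono_branches n L ?I"
  have Msub: "?M \<subseteq> {..<n}" by (auto simp: mono_branches_def)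
  have Mb: "\<forall>k\<in>?M. bv (branch L k) \<in> ?I" using mono_branch_in_I by blast
  have fM: "finite ?M" using Msub finite_subset by blast
  have notM1: "\<And>j. j < n \<Longrightarrow> L j = 1 \<Longrightarrow> j \<notin> ?M"
  proof
    fix j assume j: "j < n" "L j = 1" "j \<in> ?M"
    hence "bv (branch L j) \<in> ?I" using Mb by blast
    hence "bv (branch L j) (Pth j 0 (Suc 0)) = 0" by (rule I_eval[OF L1 tg])
    thus False using j by (simp add: branch_def bv_apply)
  qed
  have part1: "\<forall>i\<in>?M. is_der n L ?I (y_der n L i)"
    using y_is_der[OF L1 tg] Msub Mb by blast
  have part2: "\<forall>d. is_der n L ?I d \<longrightarrow> (hh1_central n L ?I d \<longleftrightarrow> in_span_y n L ?I ?M d)"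
  proof (intro allI impI iffI)
    fix d assume d: "is_der n L ?I d" and sp: "in_span_y n L ?I ?M d"
    from sp obtain c e where e: "in_E n L e"
      and h: "\<forall>x\<in>CQ n L. d x - (\<Sum>i\<in>?M. scal (c i) (y_der n L i x)) - inner_der n L e x \<in> ?I"
      unfolding in_span_y_def by blast
    let ?W = "Wd n L (wt L ?M c (\<lambda>v. e (Triv v)))"
    have hW: "\<forall>x\<in>CQ n L. d x - ?W x \<in> ?I"
    proof
      fix x assume x: "x \<in> CQ n L"
      have "d x - (\<Sum>i\<in>?M. scal (c i) (y_der n L i x)) - inner_der n L e x \<in> ?I" using h x by blast
      thus "d x - ?W x \<in> ?I" unfolding diff_diff_eq span_eq[OF Msub L1 e] .
    qed
    have cW: "\<forall>x\<in>CQ n L. ?W (d' x) - d' (?W x) \<in> ?I" if d': "is_der n L ?I d'" for d'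
      by (rule comm_W[OF L1 tg d' Msub Mb])
    show "hh1_central n L ?I d"
      unfolding hh1_central_def
    proof (intro allI impI)
      fix d' assume d': "is_der n L ?I d'"
      have E0: "in_E n L 0" by (simp add: in_E_def)
      have i0: "\<And>x. inner_der n L 0 x = 0" by (simp add: inner_der_def)
      show "\<exists>e. in_E n L e \<and> (\<forall>x\<in>CQ n L. d (d' x) - d' (d x) - inner_der n L e x \<in> ?I)"
      proof (rule exI[of _ 0], intro conjI ballI E0)
        fix x assume x: "x \<in> CQ n L"
        have dx: "d' x \<in> CQ n L" "d x \<in> CQ n L" using d d' x by (auto simp: is_der_def)
        have t1: "d (d' x) - ?W (d' x) \<in> ?I" using hW dx by blast
        have t2: "d' (d x) - d' (?W x) \<in> ?I" using d' dx(2) Wd_CQ hW x unfolding is_der_def by blast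
        have t3: "?W (d' x) - d' (?W x) \<in> ?I" using cW[OF d'] x by blast
        have eqn: "d (d' x) - d' (d x) - inner_der n L 0 x = (d (d' x) - ?W (d' x)) - (d' (d x) - d' (?W x)) + (?W (d' x) - d' (?W x))"
          unfolding i0 by (rule ext) (simp add: algebra_simps)
        show "d (d' x) - d' (d x) - inner_der n L 0 x \<in> ?I" unfolding eqn by (intro I_add I_diff t1 t2 t3)
      qed
    qed
  next
    fix d assume d: "is_der n L ?I d" and cen: "hh1_central n L ?I d"
    have "{i. i < n \<and> L i = 1} \<noteq> {}" using assms(3) unfolding num_a_def by (metis card.empty less_irrefl)
    then obtain a0 where a0: "a0 < n" "L a0 = 1" by blast
    define lam where "lam j m = d (bv (Pth j m (Suc m))) (Pth j m (Suc m))" for j m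
    define La where "La = lam a0 0"
    define pot where "pot v = (if v \<in> vertices n L then (case v of Src \<Rightarrow> La | Snk \<Rightarrow> 0 | Mid j m \<Rightarrow> (\<Sum>m'\<in>{m..<L j}. lam j m')) else 0)" for v
    define c where "c i = (\<Sum>m<L i. lam i m) - La" for i
    define e where "e r = (case r of Triv v \<Rightarrow> pot v | Pth _ _ _ \<Rightarrow> 0)" for r
    have eE: "in_E n L e"
      unfolding in_E_def CQ_def
    proof (intro conjI allI impI CollectI)
      fix p assume "p \<notin> paths n L"
      thus "e p = 0" by (cases p) (auto simp: e_def pot_def)
    qed (simp add: e_def)
    have eT: "(\<lambda>v. e (Triv v)) = pot" by (simp add: e_def fun_eq_iff)
    let ?w = "wt L ?M c pot"
    let ?W = "Wd n L ?w"
    have C1: "\<And>j. j < n \<Longrightarrow> L j = 1 \<Longrightarrow> d (bv (Pth j 0 (Suc 0))) - scal (lam j 0) (bv (Pth j 0 (Suc 0))) \<in> ?I"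
      unfolding lam_def using central_C1[OF L1 tg d cen] by simp
    have C2: "\<And>j. j < n \<Longrightarrow> L j = 1 \<Longrightarrow> lam j 0 = La"
      unfolding lam_def La_def using central_C2[OF L1 tg d cen _ _ a0] by simp
    have C3: "\<And>k. k < n \<Longrightarrow> 2 \<le> L k \<Longrightarrow> k \<notin> ?M \<Longrightarrow> (\<Sum>m<L k. lam k m) = La"
      unfolding lam_def La_def using central_C3[OF L1 tg d cen _ _ _ a0] by simp
    have potS: "pot Src = La" "pot Snk = 0" by (simp_all add: pot_def vertices_def)
    have potv: "pot (vpos L j m') = (\<Sum>m''\<in>{m'..<L j}. lam j m'')" if "j < n" "0 < m'" "m' \<le> L j" for j m'
      using that by (auto simp: pot_def vpos_def vertices_def)
    have wg: "?w (Pth j m (Suc m)) = lam j m" if j: "j < n" "m < L j" for j m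
    proof (cases "L j = 1")
      case True
      hence m0: "m = 0" using j by simp
      have "j \<notin> ?M" using notM1 j True by blast
      thus ?thesis using True m0 C2[OF j(1) True] potS fM by (simp add: wt_Pth vpos_def)
    next
      case False
      hence j2: "2 \<le> L j" using L1 j by (metis One_nat_def Suc_1 Suc_leI le_neq_implies_less)
      have p1: "pot (vpos L j (Suc m)) = (\<Sum>m''\<in>{Suc m..<L j}. lam j m'')" using potv[of j "Suc m"] j by simp
      have split: "(\<Sum>m''\<in>{m..<L j}. lam j m'') = lam j m + (\<Sum>m''\<in>{Suc m..<L j}. lam j m'')"
        by (rule sum.atLeast_Suc_lessThan[OF j(2)])
      show ?thesis
      proof (cases "m = 0")
        case False
        have p0: "pot (vpos L j m) = (\<Sum>m''\<in>{m..<L j}. lam j m'')" using potv[of j m] j False by simp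
        show ?thesis using False p0 p1 split fM by (simp add: wt_Pth)
      next
        case True
        have p0: "pot (vpos L j 0) = La" using potS by (simp add: vpos_def)
        have s0: "(\<Sum>m<L j. lam j m) = (\<Sum>m''\<in>{0..<L j}. lam j m'')" by (simp add: atLeast0LessThan)
        show ?thesis
        proof (cases "j \<in> ?M")
          case True
          thus ?thesis using \<open>m = 0\<close> p0 p1 split s0 fM by (simp add: wt_Pth c_def)
        next
          case False
          have "(\<Sum>m<L j. lam j m) = La" using C3[OF j(1) j2 False] .
          thus ?thesis using False \<open>m = 0\<close> p0 p1 split s0 fM by (simp add: wt_Pth)
        qed
      qed
    qed
    have main: "\<forall>x\<in>CQ n L. (\<lambda>x. d x - ?W x) x \<in> ?I"
    proof (rule der_vanish)
      show "\<forall>x\<in>CQ n L. \<forall>y\<in>CQ n L. (\<lambda>x. d x - ?W x) (x + y) - ((\<lambda>x. d x - ?W x) x + (\<lambda>x. d x - ?W x) y) \<in> ?I"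
      proof (intro ballI)
        fix x y assume xy: "x \<in> CQ n L" "y \<in> CQ n L"
        have eqn: "(\<lambda>x. d x - ?W x) (x + y) - ((\<lambda>x. d x - ?W x) x + (\<lambda>x. d x - ?W x) y) = d (x + y) - (d x + d y)"
          unfolding Wd_add by (rule ext) (simp add: algebra_simps)
        show "(\<lambda>x. d x - ?W x) (x + y) - ((\<lambda>x. d x - ?W x) x + (\<lambda>x. d x - ?W x) y) \<in> ?I"
          unfolding eqn using d xy unfolding is_der_def by blast
      qed
    next
      show "\<forall>c. \<forall>x\<in>CQ n L. (\<lambda>x. d x - ?W x) (scal c x) - scal c ((\<lambda>x. d x - ?W x) x) \<in> ?I"
      proof (intro allI ballI)
        fix c' x assume x: "x \<in> CQ n L"
        have eqn: "(\<lambda>x. d x - ?W x) (scal c' x) - scal c' ((\<lambda>x. d x - ?W x) x) = d (scal c' x) - scal c' (d x)"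
          unfolding Wd_scal by (rule ext) (simp add: scal_apply algebra_simps)
        show "(\<lambda>x. d x - ?W x) (scal c' x) - scal c' ((\<lambda>x. d x - ?W x) x) \<in> ?I"
          unfolding eqn using d x unfolding is_der_def by blast
      qed
    next
      show "\<forall>x\<in>CQ n L. \<forall>y\<in>CQ n L. (\<lambda>x. d x - ?W x) (mult n L x y) - (mult n L ((\<lambda>x. d x - ?W x) x) y + mult n L x ((\<lambda>x. d x - ?W x) y)) \<in> ?I"
      proof (intro ballI)
        fix x y assume xy: "x \<in> CQ n L" "y \<in> CQ n L"
        have eqn: "(\<lambda>x. d x - ?W x) (mult n L x y) - (mult n L ((\<lambda>x. d x - ?W x) x) y + mult n L x ((\<lambda>x. d x - ?W x) y)) = d (mult n L x y) - (mult n L (d x) y + mult n L x (d y))"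
          unfolding Wd_Leibniz[OF wadd_wt] mult_diff_left mult_diff_right by (rule ext) (simp add: algebra_simps)
        show "(\<lambda>x. d x - ?W x) (mult n L x y) - (mult n L ((\<lambda>x. d x - ?W x) x) y + mult n L x ((\<lambda>x. d x - ?W x) y)) \<in> ?I"
          unfolding eqn using d xy unfolding is_der_def by blast
      qed
    next
      show "\<forall>v\<in>vertices n L. (\<lambda>x. d x - ?W x) (bv (Triv v)) \<in> ?I"
      proof
        fix v assume v: "v \<in> vertices n L"
        have "?W (bv (Triv v)) = 0" using v by (simp add: Wd_bv wt_Triv fun_eq_iff scal_apply)
        hence eqn: "(\<lambda>x. d x - ?W x) (bv (Triv v)) = d (bv (Triv v))" by simp
        show "(\<lambda>x. d x - ?W x) (bv (Triv v)) \<in> ?I" unfolding eqn using d v unfolding is_der_def by blast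
      qed
    next
      show "\<forall>j<n. \<forall>m<L j. (\<lambda>x. d x - ?W x) (bv (Pth j m (Suc m))) \<in> ?I"
      proof (intro allI impI)
        fix j m assume j: "j < n" and m: "m < L j"
        have g: "Pth j m (Suc m) \<in> paths n L" using j m by auto
        have eqn: "(\<lambda>x. d x - ?W x) (bv (Pth j m (Suc m))) = d (bv (Pth j m (Suc m))) - scal (lam j m) (bv (Pth j m (Suc m)))"
          unfolding Wd_bv[OF g] wg[OF j m] by simp
        show "(\<lambda>x. d x - ?W x) (bv (Pth j m (Suc m))) \<in> ?I"
        proof (cases "L j = 1")
          case True
          hence "m = 0" using m by simp
          thus ?thesis unfolding eqn using C1[OF j True] by simp
        next
          case False
          hence j2: "2 \<le> L j" using L1 j by (metis One_nat_def Suc_1 Suc_leI le_neq_implies_less)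
          show ?thesis unfolding eqn lam_def by (rule arrow_F1[OF d j j2 m])
        qed
      qed
    qed
    show "in_span_y n L ?I ?M d"
      unfolding in_span_y_def
    proof (intro exI conjI ballI)
      show "in_E n L e" by (rule eE)
    next
      fix x assume x: "x \<in> CQ n L"
      have "d x - ?W x \<in> ?I" using main x by simp
      thus "d x - (\<Sum>i\<in>?M. scal (c i) (y_der n L i x)) - inner_der n L e x \<in> ?I"
        unfolding diff_diff_eq span_eq[OF Msub L1 eE] eT .
    qed
  qed
  show ?thesis using part1 part2 by blast
qed



end
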